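(* Suppose $(U_n)_{n\ge1}$ is i.i.d. with law $(p_A,p_C,p_G,p_T)$, all $p_u>0$, and not uniform. Then $D_n/\ln n$ does not converge almost surely; more precisely $\limsup_n D_n/\ln n\ge 1/h>1/h_+=\liminf_n D_n/\ln n$ almost surely, where $h=-\sum_u p_u\ln p_u$ and $h_+=\ln(1/\min_u p_u)$.
   Context: Alphabet $\mathcal A=\{A,C,G,T\}$. CGR-tree: nodes are finite words over $\mathcal A$ (root = empty word). With $W(n)=U_n\dots U_1$, $\mathcal T_0=\{\text{root}\}$; for $n\ge1$, $D_n$ is the smallest $k\ge1$ such that the length-$k$ prefix of $W(n)$ is not a node of $\mathcal T_{n-1}$, and $\mathcal T_n$ is $\mathcal T_{n-1}$ with that prefix added. *)

theory Defs
  imports "HOL-Probability.Probability"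
begin

datatype letter = A | C | G | T

definition cgr_word :: "(nat \<Rightarrow> letter) \<Rightarrow> nat \<Rightarrow> letter list" where
  "cgr_word u n = map u (rev [1..<Suc n])"

definition cgr_depth_in :: "letter list set \<Rightarrow> letter list \<Rightarrow> nat" where
  "cgr_depth_in Tr W = (LEAST k. 1 \<le> k \<and> k \<le> length W \<and> take k W \<notin> Tr)"

fun cgr_tree :: "(nat \<Rightarrow> letter) \<Rightarrow> nat \<Rightarrow> letter list set" where
  "cgr_tree u 0 = {[]}"
| "cgr_tree u (Suc n) =
     insert (take (cgr_depth_in (cgr_tree u n) (cgr_word u (Suc n))) (cgr_word u (Suc n)))
            (cgr_tree u n)"

text \<open>D_n for n \<ge> 1.\<close>
definition cgr_D :: "(nat \<Rightarrow> letter) \<Rightarrow> nat \<Rightarrow> nat" where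
  "cgr_D u n = cgr_depth_in (cgr_tree u (n - 1)) (cgr_word u n)"

end

theory Submission
  imports Defs "HOL-Probability.Probability" "HOL-Real_Asymp.Real_Asymp"
begin
lemma length_cgr_word[simp]: "length (cgr_word u n) = n"
  by (simp add: cgr_word_def)

lemma cgr_word_nth: "i < n \<Longrightarrow> cgr_word u n ! i = u (n - i)"
  unfolding cgr_word_def by (simp add: rev_nth Suc_diff_Suc del: upt_Suc)

lemma cgr_word_Nil[simp]: "cgr_word u n = [] \<longleftrightarrow> n = 0"
  by (metis length_cgr_word length_0_conv)

lemma take_cgr_word_nth: "i < k \<Longrightarrow> k \<le> n \<Longrightarrow> take k (cgr_word u n) ! i = u (n - i)"
  by (simp add: cgr_word_nth)

lemma cgr_word_local: "(\<And>i. 1 \<le> i \<Longrightarrow> i \<le> n \<Longrightarrow> u i = v i) \<Longrightarrow> cgr_word u n = cgr_word v n"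
  by (auto simp: cgr_word_def)

lemma cgr_tree_local: "(\<And>i. 1 \<le> i \<Longrightarrow> i \<le> n \<Longrightarrow> u i = v i) \<Longrightarrow> cgr_tree u n = cgr_tree v n"
proof (induction n)
  case 0 then show ?case by simp
next
  case (Suc n)
  have "cgr_tree u n = cgr_tree v n" using Suc by auto
  moreover have "cgr_word u (Suc n) = cgr_word v (Suc n)" using Suc.prems by (rule cgr_word_local)
  ultimately show ?case by simp
qed

lemma cgr_D_local: "(\<And>i. 1 \<le> i \<Longrightarrow> i \<le> n \<Longrightarrow> u i = v i) \<Longrightarrow> cgr_D u n = cgr_D v n"
proof -
  assume a: "\<And>i. 1 \<le> i \<Longrightarrow> i \<le> n \<Longrightarrow> u i = v i"
  have "cgr_tree u (n-1) = cgr_tree v (n-1)" by (rule cgr_tree_local) (use a in auto)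
  moreover have "cgr_word u n = cgr_word v n" by (rule cgr_word_local) (use a in auto)
  ultimately show ?thesis by (simp add: cgr_D_def)
qed

lemma finite_cgr_tree[simp]: "finite (cgr_tree u n)"
  by (induction n) auto

lemma nil_in_cgr_tree[simp]: "[] \<in> cgr_tree u n"
  by (induction n) auto

lemma card_cgr_tree_le: "card (cgr_tree u n) \<le> Suc n"
proof (induction n)
  case 0 then show ?case by simp
next
  case (Suc n)
  have "card (cgr_tree u (Suc n)) \<le> Suc (card (cgr_tree u n))"
    by (simp add: card_insert_if)
  then show ?case using Suc by linarith
qed

lemma depth_exists:
  assumes "1 \<le> n"
  shows "\<exists>k. 1 \<le> k \<and> k \<le> n \<and> take k (cgr_word u n) \<notin> cgr_tree u (n-1)"
proof (rule ccontr)
  assume "\<not> ?thesis"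
  then have sub: "(\<lambda>k. take k (cgr_word u n)) ` {1..n} \<subseteq> cgr_tree u (n-1) - {[]}"
    by (auto simp: take_eq_Nil)
  have inj: "inj_on (\<lambda>k. take k (cgr_word u n)) {1..n}"
    by (rule inj_onI) (metis atLeastAtMost_iff length_cgr_word length_take min.absorb2)
  have "n = card ((\<lambda>k. take k (cgr_word u n)) ` {1..n})"
    using card_image[OF inj] by simp
  also have "\<dots> \<le> card (cgr_tree u (n-1) - {[]})"
    by (rule card_mono) (use sub in auto)
  also have "\<dots> = card (cgr_tree u (n-1)) - 1" by simp
  also have "\<dots> \<le> n - 1" using card_cgr_tree_le[of u "n-1"] assms by simp
  finally show False using assms by simp
qed

lemma cgr_D_props:
  assumes "1 \<le> n"
  shows "1 \<le> cgr_D u n" "cgr_D u n \<le> n" "take (cgr_D u n) (cgr_word u n) \<notin> cgr_tree u (n-1)"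
    "\<And>k. 1 \<le> k \<Longrightarrow> k < cgr_D u n \<Longrightarrow> take k (cgr_word u n) \<in> cgr_tree u (n-1)"
proof -
  obtain k where k: "1 \<le> k \<and> k \<le> length (cgr_word u n) \<and> take k (cgr_word u n) \<notin> cgr_tree u (n-1)"
    using depth_exists[OF assms, of u] by auto
  note L = LeastI[of "\<lambda>k. 1 \<le> k \<and> k \<le> length (cgr_word u n) \<and> take k (cgr_word u n) \<notin> cgr_tree u (n-1)", OF k]
  show "1 \<le> cgr_D u n" "cgr_D u n \<le> n" "take (cgr_D u n) (cgr_word u n) \<notin> cgr_tree u (n-1)"
    using L by (auto simp: cgr_D_def cgr_depth_in_def)
  fix k' assume "1 \<le> k'" "k' < cgr_D u n"
  moreover have "k' \<le> n" using calculation L by (simp add: cgr_D_def cgr_depth_in_def)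
  ultimately show "take k' (cgr_word u n) \<in> cgr_tree u (n-1)"
    using not_less_Least[of k' "\<lambda>k. 1 \<le> k \<and> k \<le> length (cgr_word u n) \<and> take k (cgr_word u n) \<notin> cgr_tree u (n-1)"]
    by (auto simp: cgr_D_def cgr_depth_in_def)
qed

lemma cgr_D_le:
  assumes "1 \<le> k" "k \<le> n" "take k (cgr_word u n) \<notin> cgr_tree u (n-1)"
  shows "cgr_D u n \<le> k"
  unfolding cgr_D_def cgr_depth_in_def by (rule Least_le) (use assms in auto)

lemma cgr_tree_Suc: "cgr_tree u (Suc n) = insert (take (cgr_D u (Suc n)) (cgr_word u (Suc n))) (cgr_tree u n)"
  by (simp add: cgr_D_def)

lemma cgr_tree_mono: "m \<le> n \<Longrightarrow> cgr_tree u m \<subseteq> cgr_tree u n"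
proof (induction n)
  case 0 then show ?case by simp
next
  case (Suc n) then show ?case
    by (cases "m = Suc n") (auto simp: cgr_tree_Suc simp del: cgr_tree.simps)
qed

lemma card_cgr_tree: "card (cgr_tree u n) = Suc n"
proof (induction n)
  case 0 then show ?case by simp
next
  case (Suc n)
  have "take (cgr_D u (Suc n)) (cgr_word u (Suc n)) \<notin> cgr_tree u n"
    using cgr_D_props(3)[of "Suc n" u] by simp
  then show ?case using Suc by (simp add: cgr_tree_Suc del: cgr_tree.simps)
qed

lemma cgr_tree_elem:
  "x \<in> cgr_tree u n \<Longrightarrow> x = [] \<or> (\<exists>m. 1 \<le> m \<and> m \<le> n \<and> x = take (cgr_D u m) (cgr_word u m))"
proof (induction n)
  case 0 then show ?case by simp
next
  case (Suc n) then show ?case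
    by (auto simp: cgr_tree_Suc simp del: cgr_tree.simps) (metis le_SucI)
qed

lemma fill_step:
  assumes all: "\<And>x. length x \<le> j \<Longrightarrow> x \<in> cgr_tree u m0"
    and "m0 < m" "Suc j \<le> m" "take (Suc j) (cgr_word u m) = w"
  shows "w \<in> cgr_tree u m"
proof (cases "w \<in> cgr_tree u (m-1)")
  case True then show ?thesis using cgr_tree_mono[of "m-1" m u] by auto
next
  case False
  have m1: "1 \<le> m" using assms by simp
  have sub: "cgr_tree u m0 \<subseteq> cgr_tree u (m-1)" using assms by (intro cgr_tree_mono) auto
  have "cgr_D u m \<le> Suc j" using False assms by (intro cgr_D_le) auto
  moreover have "\<not> cgr_D u m \<le> j"
  proof
    assume "cgr_D u m \<le> j"
    then have "take (cgr_D u m) (cgr_word u m) \<in> cgr_tree u m0" by (intro all) simp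
    then show False using cgr_D_props(3)[OF m1, of u] sub by auto
  qed
  ultimately have "cgr_D u m = Suc j" by simp
  then have "w = take (cgr_D u m) (cgr_word u m)" using assms by simp
  then show ?thesis using m1 cgr_tree_Suc[of u "m-1"] by simp
qed

lemma D_gt_fill:
  assumes "\<And>x. length x \<le> k \<Longrightarrow> x \<in> cgr_tree u (n-1)" "1 \<le> n"
  shows "k < cgr_D u n"
proof (rule ccontr)
  assume "\<not> k < cgr_D u n"
  then have "take (cgr_D u n) (cgr_word u n) \<in> cgr_tree u (n-1)" by (intro assms) auto
  then show False using cgr_D_props(3)[OF assms(2)] by auto
qed

lemma D_le_first:
  assumes "1 \<le> j" "j \<le> n" "length w = j" "take j (cgr_word u n) = w"
    and none: "\<And>m. 1 \<le> m \<Longrightarrow> m < n \<Longrightarrow> j \<le> m \<Longrightarrow> take j (cgr_word u m) \<noteq> w"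
  shows "cgr_D u n \<le> j"
proof (rule cgr_D_le)
  show "take j (cgr_word u n) \<notin> cgr_tree u (n-1)"
  proof
    assume "take j (cgr_word u n) \<in> cgr_tree u (n-1)"
    then have "w \<in> cgr_tree u (n-1)" using assms by simp
    moreover have "w \<noteq> []" using assms by auto
    ultimately obtain m where m: "1 \<le> m" "m \<le> n-1" "w = take (cgr_D u m) (cgr_word u m)"
      using cgr_tree_elem by blast
    have "cgr_D u m \<le> m" using cgr_D_props(2)[OF m(1)] .
    then have "length w = cgr_D u m" using m by simp
    then have "take j (cgr_word u m) = w" "j \<le> m" using m assms \<open>cgr_D u m \<le> m\<close> by auto
    then show False using none[of m] m assms by auto
  qed
qed (use assms in auto)

lemma tree_length_bound:
  assumes "\<And>m. 1 \<le> m \<Longrightarrow> m \<le> n \<Longrightarrow> cgr_D u m \<le> K" "x \<in> cgr_tree u n"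
  shows "length x \<le> K"
proof -
  have "x = [] \<or> (\<exists>m. 1 \<le> m \<and> m \<le> n \<and> x = take (cgr_D u m) (cgr_word u m))"
    by (rule cgr_tree_elem[OF assms(2)])
  then show ?thesis
  proof
    assume "x = []" then show ?thesis by simp
  next
    assume "\<exists>m. 1 \<le> m \<and> m \<le> n \<and> x = take (cgr_D u m) (cgr_word u m)"
    then obtain m where m: "1 \<le> m" "m \<le> n" "x = take (cgr_D u m) (cgr_word u m)" by blast
    have "length x \<le> cgr_D u m" using m(3) by simp
    also have "\<dots> \<le> K" using assms(1) m(1,2) by blast
    finally show ?thesis .
  qed
qed

lemma UNIV_letter: "(UNIV :: letter set) = {A, C, G, T}"
  using letter.exhaust by auto

lemma finite_letter[simp]: "finite (UNIV :: letter set)"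
  by (simp add: UNIV_letter)

lemma card_letter: "card (UNIV :: letter set) = 4"
  by (simp add: UNIV_letter)

lemma prod_list_nth: "prod_list (map (f::_\<Rightarrow>real) w) = (\<Prod>i<length w. f (w ! i))"
proof (induction w)
  case Nil then show ?case by simp
next
  case (Cons a w) then show ?case by (simp del: prod.lessThan_Suc add: prod.lessThan_Suc_shift)
qed

locale cgr_prob = prob_space M for M :: "'s measure" +
  fixes U :: "nat \<Rightarrow> 's \<Rightarrow> letter" and p :: "letter \<Rightarrow> real"
  assumes indep: "indep_vars (\<lambda>_. count_space UNIV) U {1..}"
    and distr: "\<And>n u. n \<ge> 1 \<Longrightarrow> prob {\<omega> \<in> space M. U n \<omega> = u} = p u"
    and ppos: "\<And>u. p u > 0"
begin

lemma U_meas: "1 \<le> i \<Longrightarrow> U i \<in> measurable M (count_space UNIV)"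
  using indep by (auto simp: indep_vars_def)

lemma U_event[measurable]: "1 \<le> i \<Longrightarrow> {\<omega>\<in>space M. U i \<omega> = a} \<in> events"
proof -
  assume "1 \<le> i"
  then have "U i -` {a} \<inter> space M \<in> events" using U_meas by (intro measurable_sets) auto
  moreover have "U i -` {a} \<inter> space M = {\<omega>\<in>space M. U i \<omega> = a}" by auto
  ultimately show ?thesis by simp
qed

lemma sum_p: "(\<Sum>u\<in>UNIV. p u) = 1"
proof -
  have "(\<Sum>u\<in>UNIV. p u) = (\<Sum>u\<in>UNIV. prob {\<omega>\<in>space M. U 1 \<omega> = u})" using distr by simp
  also have "\<dots> = prob (\<Union>u\<in>UNIV. {\<omega>\<in>space M. U 1 \<omega> = u})"
    by (rule finite_measure_finite_Union[symmetric]) (auto simp: disjoint_family_on_def)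
  also have "(\<Union>u\<in>UNIV. {\<omega>\<in>space M. U 1 \<omega> = u}) = space M" by auto
  finally show ?thesis using prob_space by simp
qed

lemma p_le1: "p u \<le> 1"
proof -
  have "p u \<le> (\<Sum>v\<in>UNIV. p v)"
    by (rule member_le_sum) (use ppos less_imp_le in auto)
  then show ?thesis using sum_p by simp
qed

lemma cyl_prob:
  assumes "finite J" "J \<subseteq> {1..}"
  shows "prob {\<omega>\<in>space M. \<forall>i\<in>J. U i \<omega> = f i} = (\<Prod>i\<in>J. p (f i))"
proof (cases "J = {}")
  case True then show ?thesis using prob_space by simp
next
  case False
  have "prob (\<Inter>i\<in>J. U i -` {f i} \<inter> space M) = (\<Prod>i\<in>J. prob (U i -` {f i} \<inter> space M))"
    by (rule indep_varsD[OF indep False assms(1,2)]) auto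
  moreover have "(\<Inter>i\<in>J. U i -` {f i} \<inter> space M) = {\<omega>\<in>space M. \<forall>i\<in>J. U i \<omega> = f i}"
    using False by auto
  moreover have "\<And>i. i \<in> J \<Longrightarrow> prob (U i -` {f i} \<inter> space M) = p (f i)"
  proof -
    fix i assume "i \<in> J"
    then have "U i -` {f i} \<inter> space M = {\<omega>\<in>space M. U i \<omega> = f i}" "1 \<le> i" using assms by auto
    then show "prob (U i -` {f i} \<inter> space M) = p (f i)" using distr by simp
  qed
  ultimately show ?thesis by simp
qed

lemma cyl_event:
  assumes "finite J" "J \<subseteq> {1..}"
  shows "{\<omega>\<in>space M. \<forall>i\<in>J. U i \<omega> = f i} \<in> events"
proof (cases "J = {}")
  case True then show ?thesis by simp
next
  case False
  have "(\<Inter>i\<in>J. {\<omega>\<in>space M. U i \<omega> = f i}) \<in> events"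
    using assms False by (intro sets.finite_INT) auto
  moreover have "(\<Inter>i\<in>J. {\<omega>\<in>space M. U i \<omega> = f i}) = {\<omega>\<in>space M. \<forall>i\<in>J. U i \<omega> = f i}"
    using False by auto
  ultimately show ?thesis by simp
qed

definition Wd :: "'s \<Rightarrow> nat \<Rightarrow> letter list" where
  "Wd \<omega> m = cgr_word (\<lambda>k. U k \<omega>) m"

lemma take_Wd_eq_iff:
  assumes "j \<le> m" "length w = j"
  shows "take j (Wd \<omega> m) = w \<longleftrightarrow> (\<forall>k\<in>(\<lambda>i. m - i) ` {..<j}. U k \<omega> = w ! (m - k))"
proof -
  have "take j (Wd \<omega> m) = w \<longleftrightarrow> (\<forall>i<j. take j (Wd \<omega> m) ! i = w ! i)"
    using assms by (simp add: list_eq_iff_nth_eq Wd_def)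
  also have "\<dots> \<longleftrightarrow> (\<forall>i<j. U (m - i) \<omega> = w ! i)"
    using assms by (simp add: Wd_def cgr_word_nth)
  also have "\<dots> \<longleftrightarrow> (\<forall>k\<in>(\<lambda>i. m - i) ` {..<j}. U k \<omega> = w ! (m - k))"
    using assms by auto
  finally show ?thesis .
qed

lemma window_sub: "(j::nat) \<le> m \<Longrightarrow> (\<lambda>i. m - i) ` {..<j} \<subseteq> {1..}"
proof
  fix x assume "j \<le> m" "x \<in> (\<lambda>i. m - i) ` {..<j}"
  then obtain i where "i < j" "x = m - i" by auto
  then show "x \<in> {1..}" using \<open>j \<le> m\<close> by simp
qed

lemma window_prod:
  assumes "j \<le> m" "length w = j"
  shows "(\<Prod>k\<in>(\<lambda>i. m - i) ` {..<j}. p (w ! (m - k))) = prod_list (map p w)"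
proof -
  have inj: "inj_on (\<lambda>i. m - i) {..<j}" using assms by (auto simp: inj_on_def)
  have "(\<Prod>k\<in>(\<lambda>i. m - i) ` {..<j}. p (w ! (m - k))) = (\<Prod>i<j. p (w ! (m - (m - i))))"
    by (subst prod.reindex[OF inj]) simp
  also have "\<dots> = (\<Prod>i<j. p (w ! i))"
    using assms by (intro prod.cong) auto
  finally show ?thesis using assms by (simp add: prod_list_nth)
qed

lemma word_event[measurable]:
  assumes "j \<le> m" "length w = j"
  shows "{\<omega>\<in>space M. take j (Wd \<omega> m) = w} \<in> events"
proof -
  have "{\<omega>\<in>space M. take j (Wd \<omega> m) = w} = {\<omega>\<in>space M. \<forall>k\<in>(\<lambda>i. m - i) ` {..<j}. U k \<omega> = w ! (m - k)}"
    using take_Wd_eq_iff[OF assms] by auto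
  then show ?thesis using cyl_event[OF _ window_sub[OF assms(1)]] by simp
qed

lemma word_prob:
  assumes "j \<le> m" "length w = j"
  shows "prob {\<omega>\<in>space M. take j (Wd \<omega> m) = w} = prod_list (map p w)"
proof -
  have "{\<omega>\<in>space M. take j (Wd \<omega> m) = w} = {\<omega>\<in>space M. \<forall>k\<in>(\<lambda>i. m - i) ` {..<j}. U k \<omega> = w ! (m - k)}"
    using take_Wd_eq_iff[OF assms] by auto
  moreover have "prob {\<omega>\<in>space M. \<forall>k\<in>(\<lambda>i. m - i) ` {..<j}. U k \<omega> = w ! (m - k)}
      = (\<Prod>k\<in>(\<lambda>i. m - i) ` {..<j}. p (w ! (m - k)))"
    by (rule cyl_prob[OF _ window_sub[OF assms(1)]]) simp
  ultimately show ?thesis using window_prod[OF assms] by simp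
qed

end

context cgr_prob begin

lemma local_event:
  assumes loc: "\<And>u v. (\<And>i. 1 \<le> i \<Longrightarrow> i \<le> N \<Longrightarrow> u i = v i) \<Longrightarrow> F u = F v"
  shows "{\<omega>\<in>space M. F (\<lambda>k. U k \<omega>)} \<in> events"
proof -
  let ?S = "{f \<in> PiE {1..N} (\<lambda>_. UNIV). F f}"
  have fin: "finite ?S" by (intro finite_subset[OF _ finite_PiE[of "{1..N}" "\<lambda>_. UNIV"]]) auto
  have eq: "{\<omega>\<in>space M. F (\<lambda>k. U k \<omega>)} = (\<Union>f\<in>?S. {\<omega>\<in>space M. \<forall>i\<in>{1..N}. U i \<omega> = f i})"
  proof safe
    fix \<omega> assume \<omega>: "\<omega> \<in> space M" "F (\<lambda>k. U k \<omega>)"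
    let ?f = "restrict (\<lambda>i. U i \<omega>) {1..N}"
    have "F ?f = F (\<lambda>k. U k \<omega>)" by (rule loc) auto
    then have "?f \<in> ?S" using \<omega> by auto
    moreover have "\<omega> \<in> {\<omega>\<in>space M. \<forall>i\<in>{1..N}. U i \<omega> = ?f i}" using \<omega> by auto
    ultimately show "\<omega> \<in> (\<Union>f\<in>?S. {\<omega>\<in>space M. \<forall>i\<in>{1..N}. U i \<omega> = f i})" by blast
  next
    fix \<omega> f assume "f \<in> PiE {1..N} (\<lambda>_. UNIV)" "F f" "\<omega> \<in> space M" "\<forall>i\<in>{1..N}. U i \<omega> = f i"
    then show "F (\<lambda>k. U k \<omega>)" using loc[of f "\<lambda>k. U k \<omega>"] by auto
  qed
  show ?thesis unfolding eq
    by (intro sets.finite_UN fin ballI cyl_event) auto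
qed

lemma indep_windows:
  assumes R: "0 < (R::nat)" and K: "\<And>r. r < R \<Longrightarrow> K r \<subseteq> {1..}" "\<And>r. r < R \<Longrightarrow> finite (K r)"
    and disj: "disjoint_family_on K {..<R}"
  shows "prob {\<omega>\<in>space M. \<forall>r<R. \<not> (\<forall>i\<in>K r. U i \<omega> = g r i)} = (\<Prod>r<R. 1 - (\<Prod>i\<in>K r. p (g r i)))"
proof -
  let ?MM = "\<lambda>r. PiM (K r) (\<lambda>_. count_space (UNIV::letter set))"
  let ?X = "\<lambda>r \<omega>. restrict (\<lambda>i. U i \<omega>) (K r)"
  have ind: "indep_vars ?MM ?X {..<R}"
    by (rule indep_vars_restrict[OF indep]) (use K disj in auto)
  let ?A = "\<lambda>r. space (?MM r) - PiE (K r) (\<lambda>i. {g r i})"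
  have Asets: "?A r \<in> sets (?MM r)" if "r \<in> {..<R}" for r
    using that K by (intro sets.Diff sets.top sets_PiM_I_finite) auto
  have pre: "?X r -` ?A r \<inter> space M = {\<omega>\<in>space M. \<not> (\<forall>i\<in>K r. U i \<omega> = g r i)}" for r
    by (auto simp: space_PiM PiE_iff)
  have "prob (\<Inter>r\<in>{..<R}. ?X r -` ?A r \<inter> space M) = (\<Prod>r\<in>{..<R}. prob (?X r -` ?A r \<inter> space M))"
    by (rule indep_varsD[OF ind]) (use R Asets in auto)
  moreover have "(\<Inter>r\<in>{..<R}. ?X r -` ?A r \<inter> space M) = {\<omega>\<in>space M. \<forall>r<R. \<not> (\<forall>i\<in>K r. U i \<omega> = g r i)}"
    unfolding pre using R by auto
  moreover have "prob (?X r -` ?A r \<inter> space M) = 1 - (\<Prod>i\<in>K r. p (g r i))" if "r < R" for r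
  proof -
    have "{\<omega>\<in>space M. \<not> (\<forall>i\<in>K r. U i \<omega> = g r i)} = space M - {\<omega>\<in>space M. \<forall>i\<in>K r. U i \<omega> = g r i}"
      by auto
    then show ?thesis unfolding pre
      using prob_compl[OF cyl_event[OF K(2) K(1), OF that that, of "g r"]] cyl_prob[OF K(2) K(1), OF that that, of "g r"]
      by simp
  qed
  ultimately show ?thesis by simp
qed

lemma words_avoid_prob:
  assumes R: "0 < R" and jm: "\<And>r. r < R \<Longrightarrow> j \<le> m r" and w: "length w = j"
    and disj: "disjoint_family_on (\<lambda>r. (\<lambda>i. m r - i) ` {..<j}) {..<R}"
  shows "prob {\<omega>\<in>space M. \<forall>r<R. take j (Wd \<omega> (m r)) \<noteq> w} = (1 - prod_list (map p w)) ^ R"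
proof -
  have "{\<omega>\<in>space M. \<forall>r<R. take j (Wd \<omega> (m r)) \<noteq> w}
      = {\<omega>\<in>space M. \<forall>r<R. \<not> (\<forall>i\<in>(\<lambda>i. m r - i) ` {..<j}. U i \<omega> = w ! (m r - i))}"
    using take_Wd_eq_iff[OF jm w] by auto
  also have "prob \<dots> = (\<Prod>r<R. 1 - (\<Prod>i\<in>(\<lambda>i. m r - i) ` {..<j}. p (w ! (m r - i))))"
    by (rule indep_windows[OF R _ _ disj]) (use window_sub jm in auto)
  also have "\<dots> = (\<Prod>r<R. 1 - prod_list (map p w))"
    using window_prod[OF jm w] by simp
  finally show ?thesis by simp
qed

lemma markov_count:
  assumes "finite S" "\<And>x. x \<in> S \<Longrightarrow> B x \<in> events" "0 < c"
  shows "prob {\<omega>\<in>space M. c \<le> real (card {x\<in>S. \<omega> \<in> B x})} \<le> (\<Sum>x\<in>S. prob (B x)) / c"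
proof -
  let ?u = "\<lambda>\<omega>. \<Sum>x\<in>S. indicator (B x) \<omega> :: real"
  have u: "?u \<omega> = real (card {x\<in>S. \<omega> \<in> B x})" for \<omega>
  proof -
    have "?u \<omega> = (\<Sum>x\<in>S. if \<omega> \<in> B x then 1 else 0)" by (intro sum.cong) (auto simp: indicator_def)
    also have "\<dots> = real (card {x\<in>S. \<omega> \<in> B x})"
      using sum.inter_filter[OF \<open>finite S\<close>, of "\<lambda>_. 1::real" "\<lambda>x. \<omega> \<in> B x"] by simp
    finally show ?thesis .
  qed
  have indint: "integrable M (indicator (B x) :: 's \<Rightarrow> real)" if "x \<in> S" for x
    using assms that by (intro integrable_real_indicator) (auto simp: less_top[symmetric])
  have int: "integrable M ?u" by (rule Bochner_Integration.integrable_sum) (rule indint)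
  have "prob {\<omega>\<in>space M. c \<le> ?u \<omega>} \<le> (\<integral>\<omega>. ?u \<omega> \<partial>M) / c"
    by (rule integral_Markov_inequality_measure[OF int sets.top]) (use assms in \<open>auto intro!: sum_nonneg\<close>)
  also have "(\<integral>\<omega>. ?u \<omega> \<partial>M) = (\<Sum>x\<in>S. prob (B x))"
    using assms by (subst Bochner_Integration.integral_sum) (auto simp: indint Int_absorb2 sets.sets_into_space)
  finally show ?thesis unfolding u .
qed

end

definition words :: "nat \<Rightarrow> letter list set" where
  "words j = {w. length w = j}"

lemma words_eq: "words j = {xs. set xs \<subseteq> UNIV \<and> length xs = j}"
  by (simp add: words_def)

lemma finite_words[simp]: "finite (words j)"
  unfolding words_eq by (rule finite_lists_length_eq) simp

lemma card_words: "card (words j) = 4 ^ j"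
  using card_lists_length_eq[of "UNIV::letter set" j] by (simp add: card_letter words_def)

lemma words_Suc: "words (Suc j) = (\<lambda>(u, w). u # w) ` (UNIV \<times> words j)"
  by (auto simp: words_def length_Suc_conv image_iff)

lemma sum_words_prod:
  "(\<Sum>w\<in>words j. prod_list (map (f::letter \<Rightarrow> real) w)) = (\<Sum>u\<in>UNIV. f u) ^ j"
proof (induction j)
  case 0 then show ?case by (simp add: words_def)
next
  case (Suc j)
  have inj: "inj_on (\<lambda>(u, w). u # w) (UNIV \<times> words j)" by (auto simp: inj_on_def)
  have "(\<Sum>w\<in>words (Suc j). prod_list (map f w)) = (\<Sum>(u, w)\<in>UNIV \<times> words j. f u * prod_list (map f w))"
    unfolding words_Suc by (subst sum.reindex[OF inj]) (simp add: case_prod_beta)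
  also have "\<dots> = (\<Sum>u\<in>UNIV. \<Sum>w\<in>words j. f u * prod_list (map f w))"
    by (rule sum.cartesian_product[symmetric])
  also have "\<dots> = (\<Sum>u\<in>UNIV. f u * (\<Sum>u\<in>UNIV. f u) ^ j)"
    by (simp add: sum_distrib_left[symmetric] Suc.IH)
  also have "\<dots> = (\<Sum>u\<in>UNIV. f u) ^ Suc j" by (simp add: sum_distrib_right)
  finally show ?case .
qed

context cgr_prob begin

definition q :: real where "q = Min (p ` UNIV)"

lemma q_le: "q \<le> p u"
  unfolding q_def by (rule Min_le) auto

lemma q_attained: "\<exists>a. p a = q"
proof -
  have "Min (range p) \<in> range p" by (rule Min_in) auto
  then obtain a where "Min (range p) = p a" by blast
  then show ?thesis unfolding q_def by metis
qed

lemma q_pos: "0 < q"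
  using q_attained ppos by metis

lemma q_lt1: "q < 1"
proof -
  have "(\<Sum>u::letter\<in>UNIV. q) \<le> (\<Sum>u\<in>UNIV. p u)" by (rule sum_mono) (rule q_le)
  then have "4 * q \<le> 1" using sum_p card_letter by simp
  then show ?thesis using q_pos by simp
qed

definition hp :: real where "hp = ln (1 / q)"

lemma hp_pos: "0 < hp"
  unfolding hp_def using q_pos q_lt1 by simp

definition h :: real where "h = - (\<Sum>u\<in>UNIV. p u * ln (p u))"

lemma p_lt1: "p u < 1"
proof -
  obtain v where "v \<noteq> u" using letter.distinct(1) by metis
  have "p u + p v = (\<Sum>x\<in>{u, v}. p x)" using \<open>v \<noteq> u\<close> by simp
  also have "\<dots> \<le> (\<Sum>x\<in>UNIV. p x)"
    by (rule sum_mono2) (use ppos less_imp_le in auto)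
  finally show ?thesis using sum_p ppos[of v] by simp
qed

lemma h_pos: "0 < h"
proof -
  have "0 < (\<Sum>u\<in>UNIV. - (p u * ln (p u)))"
  proof (rule sum_pos)
    fix u :: letter
    have "ln (p u) < 0" using ppos p_lt1 by simp
    then have "p u * ln (p u) < 0" using ppos[of u] by (simp add: mult_pos_neg)
    then show "0 < - (p u * ln (p u))" by simp
  qed auto
  then show ?thesis by (simp add: h_def sum_negf)
qed

lemma h_lt_hp:
  assumes "\<exists>u v. p u \<noteq> p v"
  shows "h < hp"
proof -
  obtain u0 where u0: "p u0 \<noteq> q"
    using assms by metis
  then have u0': "q < p u0" using q_le[of u0] by simp
  have lnd: "ln (1 / p u) = - ln (p u)" for u using ppos[of u] by (simp add: ln_div)
  have "h = (\<Sum>u\<in>UNIV. p u * ln (1 / p u))"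
    unfolding h_def lnd by (simp add: sum_negf[symmetric])
  also have "\<dots> < (\<Sum>u\<in>UNIV. p u * ln (1 / q))"
  proof (rule sum_strict_mono_ex1)
    show "\<forall>u\<in>UNIV. p u * ln (1 / p u) \<le> p u * ln (1 / q)"
      using ppos q_pos q_le by (auto intro!: mult_left_mono simp: ln_div less_imp_le)
    show "\<exists>u\<in>UNIV. p u * ln (1 / p u) < p u * ln (1 / q)"
      using u0' ppos[of u0] q_pos by (intro bexI[of _ u0]) (auto simp: ln_div)
  qed auto
  also have "\<dots> = hp" by (simp add: hp_def sum_distrib_right[symmetric] sum_p)
  finally show ?thesis .
qed

lemma pw_pos: "0 < prod_list (map p w)"
  using ppos by (induction w) (auto intro: mult_pos_pos)

lemma pw_ge: "q ^ length w \<le> prod_list (map p w)"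
proof (induction w)
  case Nil then show ?case by simp
next
  case (Cons a w) then show ?case
    using q_le[of a] q_pos by (simp add: mult_mono less_imp_le)
qed

lemma pw_le1: "prod_list (map p w) \<le> 1"
proof (induction w)
  case Nil then show ?case by simp
next
  case (Cons a w) then show ?case
    using p_le1[of a] ppos[of a] pw_pos[of w] by (simp add: mult_le_one less_imp_le)
qed

lemma sum_words_p: "(\<Sum>w\<in>words j. prod_list (map p w)) = 1"
  using sum_words_prod[where j=j and f=p] sum_p by simp

lemma card_good_words:
  "card {w\<in>words j. exp (- a * j) \<le> prod_list (map p w)} \<le> exp (a * j)"
proof -
  let ?G = "{w\<in>words j. exp (- a * j) \<le> prod_list (map p w)}"
  have "real (card ?G) * exp (- a * j) = (\<Sum>w\<in>?G. exp (- a * j))" by simp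
  also have "\<dots> \<le> (\<Sum>w\<in>?G. prod_list (map p w))" by (rule sum_mono) auto
  also have "\<dots> \<le> (\<Sum>w\<in>words j. prod_list (map p w))"
    by (rule sum_mono2) (auto intro: less_imp_le pw_pos)
  finally have "real (card ?G) * exp (- a * j) \<le> 1" using sum_words_p by simp
  then have "real (card ?G) * exp (- a * j) * exp (a * j) \<le> exp (a * j)" by simp
  then show ?thesis by (simp add: mult.assoc exp_add[symmetric])
qed

lemma chernoff_param:
  assumes "h < a"
  shows "\<exists>s. 0 < s \<and> s < 1 \<and> (\<Sum>u\<in>UNIV. p u powr (1 - s)) * exp (- s * a) < 1"
proof -
  let ?g = "\<lambda>s. (\<Sum>u\<in>UNIV. p u * exp (- s * ln (p u))) * exp (- s * a)"
  have der: "DERIV ?g 0 :> (\<Sum>u\<in>UNIV. p u * (- ln (p u))) * 1 + 1 * (- a)"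
  proof -
    have d1: "DERIV (\<lambda>s. \<Sum>u\<in>UNIV. p u * exp (- s * ln (p u))) 0 :> (\<Sum>u\<in>UNIV. p u * (- ln (p u)))"
      apply (rule derivative_eq_intros refl | simp)+
      by (rule sum.cong) auto
    have d2: "DERIV (\<lambda>s. exp (- s * a)) 0 :> - a"
      by (rule derivative_eq_intros refl | simp)+
    have "(\<Sum>u\<in>UNIV. p u * exp (- 0 * ln (p u))) = 1" using sum_p by simp
    then show ?thesis using DERIV_mult[OF d1 d2] by simp
  qed
  have e: "(\<Sum>u\<in>UNIV. p u * (- ln (p u))) = h"
    unfolding h_def by (subst sum_negf[symmetric]) (rule sum.cong, auto)
  then have "(\<Sum>u\<in>UNIV. p u * (- ln (p u))) * 1 + 1 * (- a) = h - a"
    by simp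
  then have "(\<Sum>u\<in>UNIV. p u * (- ln (p u))) * 1 + 1 * (- a) < 0" using assms by simp
  from DERIV_neg_dec_right[OF der this] obtain d where d: "d > 0" "\<And>t. t > 0 \<Longrightarrow> t < d \<Longrightarrow> ?g 0 > ?g (0 + t)"
    by blast
  define s where "s = min (d / 2) (1 / 2)"
  have s: "0 < s" "s < d" "s < 1" using d by (auto simp: s_def)
  have g0: "?g 0 = 1" using sum_p by simp
  have "?g s < 1" using d(2)[OF s(1) s(2)] g0 by simp
  moreover have "(\<Sum>u\<in>UNIV. p u powr (1 - s)) = (\<Sum>u\<in>UNIV. p u * exp (- s * ln (p u)))"
  proof (rule sum.cong)
    fix u :: letter
    have "p u powr (1 - s) = exp ((1 - s) * ln (p u))" using ppos[of u] by (simp add: powr_def)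
    also have "\<dots> = p u * exp (- s * ln (p u))"
      using ppos[of u] by (simp add: algebra_simps exp_diff exp_minus divide_inverse)
    finally show "p u powr (1 - s) = p u * exp (- s * ln (p u))" .
  qed simp
  ultimately show ?thesis using s by (intro exI[of _ s]) auto
qed

lemma bad_word_bound:
  assumes s: "0 < s" "s < 1"
  shows "(\<Sum>w\<in>{w\<in>words j. prod_list (map p w) < exp (- a * j)}. prod_list (map p w))
           \<le> ((\<Sum>u\<in>UNIV. p u powr (1 - s)) * exp (- s * a)) ^ j"
proof -
  let ?B = "{w\<in>words j. prod_list (map p w) < exp (- a * j)}"
  have key: "prod_list (map p w) \<le> prod_list (map (\<lambda>u. p u powr (1 - s)) w) * exp (- s * a * j)"
    if "w \<in> ?B" for w
  proof -
    let ?P = "prod_list (map p w)"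
    have P: "0 < ?P" by (rule pw_pos)
    have "?P = ?P powr (1 - s) * ?P powr s" using P by (simp add: powr_add[symmetric])
    also have "?P powr s \<le> exp (- a * j) powr s"
      using that P s by (intro powr_mono2) auto
    also have "exp (- a * j) powr s = exp (- s * a * j)" by (simp add: powr_def)
    also have "?P powr (1 - s) = prod_list (map (\<lambda>u. p u powr (1 - s)) w)"
    proof (induction w)
      case Nil then show ?case by simp
    next
      case (Cons b w) then show ?case
        using ppos[of b] pw_pos[of w] by (simp add: powr_mult)
    qed
    finally show ?thesis using P by (simp add: mult_left_mono)
  qed
  have "(\<Sum>w\<in>?B. prod_list (map p w)) \<le> (\<Sum>w\<in>?B. prod_list (map (\<lambda>u. p u powr (1 - s)) w) * exp (- s * a * j))"
    by (rule sum_mono) (rule key)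
  also have "\<dots> \<le> (\<Sum>w\<in>words j. prod_list (map (\<lambda>u. p u powr (1 - s)) w) * exp (- s * a * j))"
    by (rule sum_mono2) (auto intro!: mult_nonneg_nonneg prod_list_nonneg)
  also have "\<dots> = (\<Sum>u\<in>UNIV. p u powr (1 - s)) ^ j * exp (- s * a * j)"
    by (simp add: sum_distrib_right[symmetric] sum_words_prod)
  also have "\<dots> = ((\<Sum>u\<in>UNIV. p u powr (1 - s)) * exp (- s * a)) ^ j"
    by (simp add: power_mult_distrib exp_of_nat_mult[symmetric] mult.commute)
  finally show ?thesis .
qed

end

lemma stages_fill:
  assumes kL: "k * L \<le> n'"
    and G: "\<And>j w. 1 \<le> j \<Longrightarrow> j \<le> k \<Longrightarrow> length w = j \<Longrightarrow>
              \<exists>r < L div j. take j (cgr_word u ((j - 1) * L + j * (r + 1))) = w"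
    and x: "length x \<le> k"
  shows "x \<in> cgr_tree u n'"
proof -
  have claim: "\<forall>x. length x \<le> j \<longrightarrow> x \<in> cgr_tree u (j * L)" if "j \<le> k" for j
    using that
  proof (induction j)
    case 0 then show ?case by simp
  next
    case (Suc j)
    have IH: "\<And>x. length x \<le> j \<Longrightarrow> x \<in> cgr_tree u (j * L)" using Suc by auto
    show ?case
    proof (intro allI impI)
      fix x :: "letter list" assume lx: "length x \<le> Suc j"
      show "x \<in> cgr_tree u (Suc j * L)"
      proof (cases "length x \<le> j")
        case True
        then show ?thesis using IH cgr_tree_mono[of "j * L" "Suc j * L" u] by auto
      next
        case False
        then have lx': "length x = Suc j" using lx by simp
        obtain r where r: "r < L div Suc j" "take (Suc j) (cgr_word u (j * L + Suc j * (r + 1))) = x"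
          using G[of "Suc j" x] Suc.prems lx' by auto
        let ?m = "j * L + Suc j * (r + 1)"
        have "x \<in> cgr_tree u ?m"
          by (rule fill_step[OF IH _ _ r(2)]) auto
        moreover have "?m \<le> Suc j * L"
        proof -
          have "Suc j * (r + 1) \<le> Suc j * (L div Suc j)" using r(1) by (intro mult_le_mono2) simp
          also have "\<dots> \<le> L" using mult_div_mod_eq[of "Suc j" L] by linarith
          finally show ?thesis by simp
        qed
        ultimately show ?thesis using cgr_tree_mono[of ?m "Suc j * L" u] by auto
      qed
    qed
  qed
  have "x \<in> cgr_tree u (k * L)" using claim[of k] x by auto
  then show ?thesis using cgr_tree_mono[OF kL] by auto
qed

lemma windows_disjoint:
  fixes j L :: nat
  shows "disjoint_family_on (\<lambda>r. (\<lambda>i. ((j - 1) * L + j * (r + 1)) - i) ` {..<j}) {..<R}"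
unfolding disjoint_family_on_def
proof (intro ballI impI)
  fix r r' assume rr: "r \<in> {..<R}" "r' \<in> {..<R}" "r \<noteq> r'"
  show "(\<lambda>i. ((j - 1) * L + j * (r + 1)) - i) ` {..<j} \<inter> (\<lambda>i. ((j - 1) * L + j * (r' + 1)) - i) ` {..<j} = {}"
  proof (rule ccontr)
    assume "\<not> ?thesis"
    then obtain i i' where ii: "i < j" "i' < j" "(j - 1) * L + j * (r + 1) - i = (j - 1) * L + j * (r' + 1) - i'"
      by auto
    have e: "j * r + (j - i) = j * r' + (j - i')"
    proof -
      have "j * (r + 1) = j * r + j" "j * (r' + 1) = j * r' + j" by simp_all
      then show ?thesis using ii by linarith
    qed
    show False
    proof (cases "r < r'")
      case True
      then have "j * r + j \<le> j * r'" by (metis Suc_leI mult_Suc_right mult_le_mono2 add.commute)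
      then show False using e ii by linarith
    next
      case False
      then have "r' < r" using rr by simp
      then have "j * r' + j \<le> j * r" by (metis Suc_leI mult_Suc_right mult_le_mono2 add.commute)
      then show False using e ii by linarith
    qed
  qed
qed

context cgr_prob begin

lemma Wd_local: "(\<And>i. 1 \<le> i \<Longrightarrow> i \<le> m \<Longrightarrow> U i \<omega> = U i \<omega>') \<Longrightarrow> Wd \<omega> m = Wd \<omega>' m"
  unfolding Wd_def by (rule cgr_word_local)

lemma avoid_event:
  assumes "0 < (R::nat)" "\<And>r. r < R \<Longrightarrow> j \<le> m r" "length w = j"
  shows "{\<omega>\<in>space M. \<forall>r<R. take j (Wd \<omega> (m r)) \<noteq> w} \<in> events"
proof -
  have "{\<omega>\<in>space M. \<forall>r<R. take j (Wd \<omega> (m r)) \<noteq> w}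
      = space M \<inter> (\<Inter>r\<in>{..<R}. space M - {\<omega>\<in>space M. take j (Wd \<omega> (m r)) = w})" by auto
  also have "\<dots> \<in> events"
    using assms by (intro sets.Int sets.top sets.countable_INT' sets.Diff word_event) (auto intro: countable_finite)
  finally show ?thesis .
qed

lemma one_minus_pow_le_exp:
  assumes "0 \<le> (x::real)" "x \<le> 1"
  shows "(1 - x) ^ R \<le> exp (- x * R)"
proof -
  have "(1 - x) ^ R \<le> exp (- x) ^ R"
    using assms by (intro power_mono) (auto simp: exp_ge_add_one_self[of "-x", simplified] add.commute)
  also have "\<dots> = exp (- x * R)" by (simp add: exp_of_nat_mult[symmetric] mult.commute)
  finally show ?thesis .
qed

lemma fill_fail_prob:
  assumes k1: "1 \<le> k" and Lk: "k \<le> L" and kL: "k * L \<le> n'"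
  shows "prob {\<omega>\<in>space M. \<not> (\<forall>x. length x \<le> k \<longrightarrow> x \<in> cgr_tree (\<lambda>i. U i \<omega>) n')}
           \<le> real k * 4 ^ k * exp (- (q ^ k) * real (L div k))"
proof -
  define m where "m j r = (j - 1) * L + j * (r + 1)" for j r :: nat
  define I where "I = (SIGMA j:{1..k}. words j)"
  define E where "E jw = {\<omega>\<in>space M. \<forall>r < L div (fst jw). take (fst jw) (Wd \<omega> (m (fst jw) r)) \<noteq> snd jw}" for jw
  have finI: "finite I" unfolding I_def by auto
  have Eev: "E jw \<in> events" if "jw \<in> I" for jw
    using that unfolding E_def I_def words_def m_def by (intro avoid_event) (auto simp: m_def div_greater_zero_iff Lk intro: le_trans[OF _ Lk])
  have sub: "{\<omega>\<in>space M. \<not> (\<forall>x. length x \<le> k \<longrightarrow> x \<in> cgr_tree (\<lambda>i. U i \<omega>) n')} \<subseteq> (\<Union>jw\<in>I. E jw)"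
  proof (rule subsetI)
    fix \<omega> assume "\<omega> \<in> {\<omega>\<in>space M. \<not> (\<forall>x. length x \<le> k \<longrightarrow> x \<in> cgr_tree (\<lambda>i. U i \<omega>) n')}"
    then obtain x where \<omega>: "\<omega> \<in> space M" "length x \<le> k" "x \<notin> cgr_tree (\<lambda>i. U i \<omega>) n'" by auto
    show "\<omega> \<in> (\<Union>jw\<in>I. E jw)"
    proof (rule ccontr)
      assume nE: "\<omega> \<notin> (\<Union>jw\<in>I. E jw)"
      have "x \<in> cgr_tree (\<lambda>i. U i \<omega>) n'"
      proof (rule stages_fill[OF kL _ \<omega>(2)])
        fix j w assume jw: "1 \<le> j" "j \<le> k" "length (w::letter list) = j"
        then have "(j, w) \<in> I" by (auto simp: I_def words_def)
        then have "\<omega> \<notin> E (j, w)" using nE by auto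
        then show "\<exists>r < L div j. take j (cgr_word (\<lambda>i. U i \<omega>) ((j - 1) * L + j * (r + 1))) = w"
          using \<omega>(1) by (auto simp: E_def m_def Wd_def)
      qed
      then show False using \<omega>(3) by simp
    qed
  qed
  have bound: "prob (E jw) \<le> exp (- (q ^ k) * real (L div k))" if "jw \<in> I" for jw
  proof -
    obtain j w where jw: "jw = (j, w)" "1 \<le> j" "j \<le> k" "length w = j"
      using \<open>jw \<in> I\<close> by (cases jw) (auto simp: I_def words_def)
    have R: "0 < L div j" using jw Lk by (simp add: div_greater_zero_iff)
    have "prob (E jw) = (1 - prod_list (map p w)) ^ (L div j)"
      unfolding E_def jw fst_conv snd_conv m_def
      by (rule words_avoid_prob[OF R _ jw(4) windows_disjoint]) (use jw in auto)
    also have "\<dots> \<le> exp (- prod_list (map p w) * real (L div j))"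
      by (rule one_minus_pow_le_exp) (auto intro: less_imp_le pw_pos pw_le1)
    also have "\<dots> \<le> exp (- (q ^ k) * real (L div k))"
    proof -
      have "q ^ k \<le> q ^ j" using jw q_pos q_lt1 by (intro power_decreasing) auto
      also have "\<dots> \<le> prod_list (map p w)" using pw_ge[of w] jw by simp
      finally have a: "q ^ k \<le> prod_list (map p w)" .
      have b: "real (L div k) \<le> real (L div j)" using jw by (simp add: div_le_mono2)
      have "q ^ k * real (L div k) \<le> prod_list (map p w) * real (L div j)"
        using a b q_pos pw_pos[of w] by (intro mult_mono) auto
      then show ?thesis by simp
    qed
    finally show ?thesis .
  qed
  have "prob {\<omega>\<in>space M. \<not> (\<forall>x. length x \<le> k \<longrightarrow> x \<in> cgr_tree (\<lambda>i. U i \<omega>) n')} \<le> prob (\<Union>jw\<in>I. E jw)"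
    by (rule finite_measure_mono[OF sub]) (use finI Eev in auto)
  also have "\<dots> \<le> (\<Sum>jw\<in>I. prob (E jw))"
    by (rule finite_measure_subadditive_finite) (use finI Eev in auto)
  also have "\<dots> \<le> (\<Sum>jw\<in>I. exp (- (q ^ k) * real (L div k)))"
    by (rule sum_mono) (rule bound)
  also have "\<dots> = real (card I) * exp (- (q ^ k) * real (L div k))" by simp
  also have "real (card I) \<le> real k * 4 ^ k"
  proof -
    have "card I = (\<Sum>j\<in>{1..k}. card (words j))" unfolding I_def by (simp add: card_SigmaI)
    also have "\<dots> \<le> (\<Sum>j\<in>{1..k}. 4 ^ k)"
      unfolding card_words by (rule sum_mono) (simp add: power_increasing)
    also have "\<dots> = k * 4 ^ k" by simp
    finally show ?thesis by (simp add: of_nat_mono[of "card I" "k * 4^k", simplified])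
  qed
  then have "real (card I) * exp (- (q ^ k) * real (L div k)) \<le> real k * 4 ^ k * exp (- (q ^ k) * real (L div k))"
    by (intro mult_right_mono) auto
  finally show ?thesis .
qed

end

lemma real_div_ge: "0 < b \<Longrightarrow> real a / real b - 1 \<le> real (a div b)"
proof -
  assume b: "0 < b"
  have "a = b * (a div b) + a mod b" by simp
  then have "real a = real b * real (a div b) + real (a mod b)" by (metis of_nat_add of_nat_mult)
  moreover have "real (a mod b) < real b" using b by simp
  ultimately have "real a < real b * (real (a div b) + 1)" by (simp add: algebra_simps)
  then have "real a / real b < real (a div b) + 1" using b by (simp add: field_simps)
  then show ?thesis by simp
qed

lemma kk_le: "0 \<le> x \<Longrightarrow> real (nat \<lfloor>x\<rfloor>) \<le> x"
  by linarith

lemma kk_gt: "x < real (nat \<lfloor>x\<rfloor>) + 1"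
  by linarith

context cgr_prob begin

lemma ln_q: "ln q = - hp"
  unfolding hp_def using q_pos by (simp add: ln_div)

lemma fill_event:
  "{\<omega>\<in>space M. \<not> (\<forall>x. length x \<le> k \<longrightarrow> x \<in> cgr_tree (\<lambda>i. U i \<omega>) N)} \<in> events"
proof (rule local_event[where N=N])
  fix u v :: "nat \<Rightarrow> letter" assume "\<And>i. 1 \<le> i \<Longrightarrow> i \<le> N \<Longrightarrow> u i = v i"
  then have "cgr_tree u N = cgr_tree v N" by (rule cgr_tree_local)
  then show "(\<not> (\<forall>x. length x \<le> k \<longrightarrow> x \<in> cgr_tree u N)) = (\<not> (\<forall>x. length x \<le> k \<longrightarrow> x \<in> cgr_tree v N))"
    by simp
qed

lemma fill_prob_asymp:
  assumes b: "0 < b" "b * hp < 1"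
  defines "kk \<equiv> \<lambda>n::nat. nat \<lfloor>b * ln (real n)\<rfloor>"
  shows "\<forall>\<^sub>F n in at_top. prob {\<omega>\<in>space M. \<not> (\<forall>x. length x \<le> kk n \<longrightarrow> x \<in> cgr_tree (\<lambda>i. U i \<omega>) (n - 1))}
            \<le> inverse (real n ^ 2)"
proof -
  define g where "g = b * hp"
  have g: "0 < g" "g < 1" using b hp_pos by (auto simp: g_def)
  define f where "f n = b * ln (real n) * real n powr (b * ln 4) *
      exp (- (real n powr (- g)) * ((real n - 1) / (b * ln (real n))^2 - 2))" for n :: nat
  have lim: "((\<lambda>n::nat. real n ^ 2 * f n) \<longlongrightarrow> 0) at_top"
    unfolding f_def using b g by real_asymp
  have ev1: "\<forall>\<^sub>F n in at_top. real n ^ 2 * f n < 1"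
    using order_tendstoD(2)[OF lim, of 1] by simp
  have ev2: "\<forall>\<^sub>F n::nat in at_top. 1 \<le> b * ln (real n)"
    using b by real_asymp
  have ev3: "\<forall>\<^sub>F n::nat in at_top. (b * ln (real n)) ^ 2 \<le> real n - 1"
    using b by real_asymp
  have ev4: "\<forall>\<^sub>F n::nat in at_top. 2 \<le> n"
    by (rule eventually_ge_at_top)
  show ?thesis
    using ev1 ev2 ev3 ev4
  proof eventually_elim
    case (elim n)
    define k where "k = kk n"
    define L where "L = (n - 1) div k"
    have k_le: "real k \<le> b * ln (real n)" unfolding k_def kk_def using elim b by (intro kk_le) auto
    have k1: "1 \<le> k" unfolding k_def kk_def using elim by linarith
    have kk_sq: "k * k \<le> n - 1"
    proof -
      have "real k * real k \<le> (b * ln (real n)) ^ 2"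
        using k_le k1 by (simp add: power2_eq_square mult_mono)
      then have "real (k * k) \<le> real (n - 1)" using elim by (simp add: of_nat_diff)
      then show ?thesis by linarith
    qed
    have Lk: "k \<le> L" unfolding L_def using k1 kk_sq by (simp add: less_eq_div_iff_mult_less_eq)
    have kL: "k * L \<le> n - 1" unfolding L_def by simp
    have P: "prob {\<omega>\<in>space M. \<not> (\<forall>x. length x \<le> k \<longrightarrow> x \<in> cgr_tree (\<lambda>i. U i \<omega>) (n - 1))}
           \<le> real k * 4 ^ k * exp (- (q ^ k) * real (L div k))"
      by (rule fill_fail_prob[OF k1 Lk kL])
    have n2: "2 \<le> real n" using elim by simp
    have lnpos: "0 < ln (real n)" using n2 by simp
    have pow4: "(4::real) ^ k \<le> real n powr (b * ln 4)"
    proof -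
      have "(4::real) ^ k = 4 powr real k" by (simp add: powr_realpow)
      also have "\<dots> \<le> 4 powr (b * ln (real n))" using k_le by (intro powr_mono) auto
      also have "\<dots> = real n powr (b * ln 4)" using n2 by (simp add: powr_def)
      finally show ?thesis .
    qed
    have powq: "real n powr (- g) \<le> q ^ k"
    proof -
      have "real n powr (- g) = q powr (b * ln (real n))"
        using n2 q_pos by (simp add: powr_def ln_q g_def)
      also have "\<dots> \<le> q powr real k" using k_le q_pos q_lt1 by (intro powr_mono') auto
      also have "\<dots> = q ^ k" using q_pos by (simp add: powr_realpow)
      finally show ?thesis .
    qed
    have divb: "(real n - 1) / (b * ln (real n))^2 - 2 \<le> real (L div k)"
    proof -
      have kpos: "0 < real k" using k1 by simp
      have "real (L div k) \<ge> real L / real k - 1" using k1 by (intro real_div_ge) simp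
      moreover have "real L \<ge> real (n - 1) / real k - 1" unfolding L_def using k1 by (intro real_div_ge) simp
      ultimately have "real (L div k) \<ge> (real (n - 1) / real k - 1) / real k - 1"
        using kpos by (smt (verit, ccfv_SIG) divide_right_mono)
      moreover have "(real (n - 1) / real k - 1) / real k - 1 = real (n - 1) / (real k)^2 - 1 / real k - 1"
        using kpos by (simp add: field_simps power2_eq_square)
      moreover have "1 / real k \<le> 1" using k1 by simp
      moreover have "(real n - 1) / (b * ln (real n))^2 \<le> real (n - 1) / (real k)^2"
      proof -
        have e: "real (n - 1) = real n - 1" using elim by (simp add: of_nat_diff)
        have "(real n - 1) / (b * ln (real n))^2 \<le> (real n - 1) / (real k)^2"
          using kpos k_le n2 by (intro divide_left_mono power_mono) (auto intro!: mult_pos_pos)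
        then show ?thesis unfolding e .
      qed
      ultimately show ?thesis by linarith
    qed
    have expb: "exp (- (q ^ k) * real (L div k)) \<le> exp (- (real n powr (- g)) * ((real n - 1) / (b * ln (real n))^2 - 2))"
    proof -
      have "real n powr (- g) * ((real n - 1) / (b * ln (real n))^2 - 2) \<le> real n powr (- g) * real (L div k)"
        using divb by (intro mult_left_mono) auto
      also have "\<dots> \<le> q ^ k * real (L div k)" using powq by (intro mult_right_mono) auto
      finally show ?thesis by simp
    qed
    have "real k * 4 ^ k * exp (- (q ^ k) * real (L div k)) \<le> f n"
      unfolding f_def
      using k_le pow4 expb by (intro mult_mono) (auto simp: ln_ge_zero)
    then have "prob {\<omega>\<in>space M. \<not> (\<forall>x. length x \<le> kk n \<longrightarrow> x \<in> cgr_tree (\<lambda>i. U i \<omega>) (n - 1))} \<le> f n"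
      using P unfolding k_def by linarith
    moreover have "f n \<le> inverse (real n ^ 2)"
      using elim(1) n2 by (simp add: field_simps)
    ultimately show ?case by linarith
  qed
qed

lemma fill_AE:
  assumes b: "0 < b" "b * hp < 1"
  shows "AE \<omega> in M. \<forall>\<^sub>F n in sequentially. \<forall>x. length x \<le> nat \<lfloor>b * ln (real n)\<rfloor> \<longrightarrow> x \<in> cgr_tree (\<lambda>i. U i \<omega>) (n - 1)"
proof -
  define B where "B n = {\<omega>\<in>space M. \<not> (\<forall>x. length x \<le> nat \<lfloor>b * ln (real n)\<rfloor> \<longrightarrow> x \<in> cgr_tree (\<lambda>i. U i \<omega>) (n - 1))}" for n :: nat
  have Bev: "B n \<in> events" for n unfolding B_def by (rule fill_event)
  have ev: "\<forall>\<^sub>F n in at_top. prob (B n) \<le> inverse (real n ^ 2)"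
    unfolding B_def by (rule fill_prob_asymp[OF b])
  then obtain N where N: "\<And>n. n \<ge> N \<Longrightarrow> prob (B n) \<le> inverse (real n ^ 2)"
    by (auto simp: eventually_at_top_linorder)
  have summ: "summable (\<lambda>n. prob (B n))"
    by (rule summable_comparison_test'[OF inverse_power_summable[of 2, where 'a=real]]) (use N in auto)
  have "AE \<omega> in M. \<forall>\<^sub>F n in sequentially. \<omega> \<in> space M - B n"
    by (rule borel_cantelli_AE1[OF Bev _ summ]) (simp add: emeasure_eq_measure)
  then show ?thesis
    by eventually_elim (auto simp: B_def elim: eventually_mono)
qed

lemma D_lower_AE:
  assumes b: "0 < b" "b * hp < 1"
  shows "AE \<omega> in M. \<forall>\<^sub>F n in sequentially. b \<le> real (cgr_D (\<lambda>k. U k \<omega>) n) / ln (real n)"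
  using fill_AE[OF b]
proof eventually_elim
  case (elim \<omega>)
  then show ?case
  proof (rule eventually_mono[OF eventually_conj[OF _ eventually_ge_at_top[of 2]]])
    fix n :: nat
    assume a: "(\<forall>x. length x \<le> nat \<lfloor>b * ln (real n)\<rfloor> \<longrightarrow> x \<in> cgr_tree (\<lambda>i. U i \<omega>) (n - 1)) \<and> 2 \<le> n"
    then have "nat \<lfloor>b * ln (real n)\<rfloor> < cgr_D (\<lambda>k. U k \<omega>) n"
      by (intro D_gt_fill) auto
    then have "b * ln (real n) < real (cgr_D (\<lambda>k. U k \<omega>) n)"
      using kk_gt[of "b * ln (real n)"] by linarith
    moreover have "0 < ln (real n)" using a by simp
    ultimately show "b \<le> real (cgr_D (\<lambda>k. U k \<omega>) n) / ln (real n)"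
      by (simp add: field_simps)
  qed
qed

end

context cgr_prob begin

lemma rep_word_prob:
  assumes "j \<le> m" "p a = q"
  shows "prob {\<omega>\<in>space M. take j (Wd \<omega> m) = replicate j a} = q ^ j"
  using word_prob[OF assms(1), of "replicate j a"] assms(2) by simp

lemma first_occ_AE:
  assumes g: "0 < g" "g < 1" and a: "p a = q"
  shows "AE \<omega> in M. \<forall>\<^sub>F j in sequentially.
            \<forall>m. j \<le> m \<longrightarrow> m \<le> nat \<lfloor>q powr (- (g * real j))\<rfloor> \<longrightarrow> take j (Wd \<omega> m) \<noteq> replicate j a"
proof -
  define Nj where "Nj j = nat \<lfloor>q powr (- (g * real j))\<rfloor>" for j :: nat
  define E where "E j = (\<Union>m\<in>{j..Nj j}. {\<omega>\<in>space M. take j (Wd \<omega> m) = replicate j a})" for j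
  have Eev: "E j \<in> events" for j
    unfolding E_def by (intro sets.finite_UN) (auto intro!: word_event)
  define r where "r = q powr (1 - g)"
  have lnq: "ln q < 0" using q_pos q_lt1 by simp
  have r: "0 \<le> r" "r < 1" unfolding r_def powr_def using q_pos g lnq by (auto simp: mult_pos_neg)
  have Ebound: "prob (E j) \<le> r ^ j" if j1: "1 \<le> j" for j
  proof -
    have "prob (E j) \<le> (\<Sum>m\<in>{j..Nj j}. prob {\<omega>\<in>space M. take j (Wd \<omega> m) = replicate j a})"
      unfolding E_def by (rule finite_measure_subadditive_finite) (auto intro!: word_event)
    also have "\<dots> = (\<Sum>m\<in>{j..Nj j}. q ^ j)"
      by (rule sum.cong) (auto simp: rep_word_prob a)
    also have "\<dots> = real (card {j..Nj j}) * q ^ j" by simp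
    also have "\<dots> \<le> real (Nj j) * q ^ j"
      using q_pos j1 by (intro mult_right_mono) auto
    also have "\<dots> \<le> q powr (- (g * real j)) * q ^ j"
    proof -
      have "real (Nj j) \<le> q powr (- (g * real j))" unfolding Nj_def
        by (intro kk_le) auto
      then show ?thesis using q_pos by (intro mult_right_mono) auto
    qed
    also have "\<dots> = r ^ j"
      unfolding r_def using q_pos
      by (simp add: powr_realpow[symmetric] powr_powr powr_add[symmetric] algebra_simps)
    finally show ?thesis .
  qed
  have summ: "summable (\<lambda>j. prob (E j))"
  proof (rule summable_comparison_test'[OF summable_geometric[of r], where N=1])
    show "norm r < 1" using r by simp
    fix n :: nat assume "1 \<le> n"
    then show "norm (prob (E n)) \<le> r ^ n" using Ebound[of n] by simp
  qed
  have "AE \<omega> in M. \<forall>\<^sub>F j in sequentially. \<omega> \<in> space M - E j"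
    by (rule borel_cantelli_AE1[OF Eev _ summ]) (simp add: emeasure_eq_measure)
  then show ?thesis
    by eventually_elim (auto simp: E_def Nj_def elim!: eventually_mono)
qed

lemma liminf_upper_AE:
  assumes g: "0 < g" "g < 1"
  shows "AE \<omega> in M. \<forall>N. \<exists>n\<ge>N. real (cgr_D (\<lambda>k. U k \<omega>) n) / ln (real n) \<le> 1 / (g * hp)"
proof -
  obtain a where a: "p a = q" using q_attained by blast
  define b0 where "b0 = 1 / (2 * hp)"
  have b0: "0 < b0" "b0 * hp < 1" unfolding b0_def using hp_pos by auto
  have lim: "filterlim (\<lambda>n::nat. b0 * ln (real n)) at_top at_top"
    using b0 by real_asymp
  show ?thesis
    using fill_AE[OF b0] first_occ_AE[OF g a]
  proof eventually_elim
    case (elim \<omega>)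
    let ?u = "\<lambda>k. U k \<omega>"
    from elim(2) obtain J where J: "\<And>j m. j \<ge> J \<Longrightarrow> j \<le> m \<Longrightarrow> m \<le> nat \<lfloor>q powr (- (g * real j))\<rfloor>
        \<Longrightarrow> take j (Wd \<omega> m) \<noteq> replicate j a"
      by (auto simp: eventually_sequentially)
    have occ: "\<exists>m. j \<le> m \<and> take j (cgr_word ?u m) = replicate j a" if j1: "1 \<le> j" for j
    proof -
      have "\<forall>\<^sub>F n in sequentially. real j + 1 \<le> b0 * ln (real n)"
        using lim by (simp add: filterlim_at_top)
      then have "\<forall>\<^sub>F n in sequentially. real j + 1 \<le> b0 * ln (real n) \<and>
                  (\<forall>x. length x \<le> nat \<lfloor>b0 * ln (real n)\<rfloor> \<longrightarrow> x \<in> cgr_tree ?u (n - 1))"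
        using elim(1) by (rule eventually_conj)
      then obtain n where n: "real j + 1 \<le> b0 * ln (real n)"
          "\<And>x. length x \<le> nat \<lfloor>b0 * ln (real n)\<rfloor> \<Longrightarrow> x \<in> cgr_tree ?u (n - 1)"
        by (auto simp: eventually_sequentially)
      have "j \<le> nat \<lfloor>b0 * ln (real n)\<rfloor>" using n(1) by (intro le_nat_floor) linarith
      then have "replicate j a \<in> cgr_tree ?u (n - 1)" by (intro n(2)) simp
      moreover have "replicate j a \<noteq> []" using j1 by simp
      ultimately obtain m where m: "1 \<le> m" "replicate j a = take (cgr_D ?u m) (cgr_word ?u m)"
        using cgr_tree_elem by blast
      have "cgr_D ?u m \<le> m" using cgr_D_props(2)[OF m(1)] .
      then have "length (replicate j a) = cgr_D ?u m" using m(2) by (metis length_cgr_word length_take min.absorb2)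
      then have "j = cgr_D ?u m" by simp
      then show ?thesis using m \<open>cgr_D ?u m \<le> m\<close> by auto
    qed
    show ?case
    proof
      fix N :: nat
      define j where "j = max N (max J 1)"
      have j1: "1 \<le> j" "J \<le> j" "N \<le> j" unfolding j_def by auto
      define nj where "nj = (LEAST m. j \<le> m \<and> take j (cgr_word ?u m) = replicate j a)"
      have nj: "j \<le> nj" "take j (cgr_word ?u nj) = replicate j a"
        using LeastI_ex[OF occ[OF j1(1)]] unfolding nj_def by auto
      have Dle: "cgr_D ?u nj \<le> j"
      proof (rule D_le_first[OF j1(1) nj(1) _ nj(2)])
        fix m assume "1 \<le> m" "m < nj" "j \<le> m"
        then show "take j (cgr_word ?u m) \<noteq> replicate j a"
          using not_less_Least[of m "\<lambda>m. j \<le> m \<and> take j (cgr_word ?u m) = replicate j a"]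
          unfolding nj_def by auto
      qed simp
      have big: "nat \<lfloor>q powr (- (g * real j))\<rfloor> < nj"
      proof (rule ccontr)
        assume "\<not> ?thesis"
        then have "take j (Wd \<omega> nj) \<noteq> replicate j a" using J[OF j1(2) nj(1)] by simp
        then show False using nj(2) by (simp add: Wd_def)
      qed
      have "q powr (- (g * real j)) < real nj"
        using big kk_gt[of "q powr (- (g * real j))"] by linarith
      then have "ln (q powr (- (g * real j))) < ln (real nj)"
        using q_pos nj(1) j1(1) by (subst ln_less_cancel_iff) auto
      then have lnj: "g * real j * hp < ln (real nj)"
        using q_pos by (simp add: ln_powr ln_q)
      have pos: "0 < g * real j * hp" using g j1 hp_pos by simp
      have "real (cgr_D ?u nj) / ln (real nj) \<le> real j / ln (real nj)"
        using Dle lnj pos by (intro divide_right_mono) auto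
      also have "\<dots> \<le> real j / (g * real j * hp)"
        using lnj pos by (intro divide_left_mono) auto
      also have "\<dots> = 1 / (g * hp)" using j1 by simp
      finally have "real (cgr_D ?u nj) / ln (real nj) \<le> 1 / (g * hp)" .
      moreover have "N \<le> nj" using j1 nj by simp
      ultimately show "\<exists>n\<ge>N. real (cgr_D ?u n) / ln (real n) \<le> 1 / (g * hp)" by blast
    qed
  qed
qed

end

context cgr_prob begin

definition BadS :: "real \<Rightarrow> nat \<Rightarrow> nat \<Rightarrow> (nat \<Rightarrow> letter) \<Rightarrow> (nat \<times> nat) set" where
  "BadS a J0 n u = {mj \<in> (SIGMA m:{1..n}. {J0<..m}).
      prod_list (map p (take (snd mj) (cgr_word u (fst mj)))) < exp (- a * real (snd mj))}"

lemma finite_BadS: "finite (BadS a J0 n u)"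
  unfolding BadS_def by (rule finite_subset[of _ "SIGMA m:{1..n}. {J0<..m}"]) auto

lemma count_bad:
  assumes a: "0 \<le> a" and DK: "\<And>m. 1 \<le> m \<Longrightarrow> m \<le> n \<Longrightarrow> cgr_D u m \<le> K"
  shows "real (n + 1) \<le> real (card {x::letter list. length x \<le> J0}) + real (K + 1) * exp (a * K)
            + real (card (BadS a J0 n u))"
proof -
  let ?A1 = "{x::letter list. length x \<le> J0}"
  let ?G = "\<lambda>j. {w\<in>words j. exp (- a * real j) \<le> prod_list (map p w)}"
  let ?A2 = "\<Union>j\<in>{..K}. ?G j"
  let ?A3 = "(\<lambda>mj. take (snd mj) (cgr_word u (fst mj))) ` BadS a J0 n u"
  have fin1: "finite ?A1"
    using finite_lists_length_le[of "UNIV::letter set" J0] by simp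
  have finG: "finite (?G j)" for j by (rule finite_subset[OF _ finite_words[of j]]) auto
  have fin2: "finite ?A2" by (intro finite_UN_I finite_atMost finG)
  have fin3: "finite ?A3" using finite_BadS by simp
  have sub: "cgr_tree u n \<subseteq> ?A1 \<union> ?A2 \<union> ?A3"
  proof
    fix x assume x: "x \<in> cgr_tree u n"
    show "x \<in> ?A1 \<union> ?A2 \<union> ?A3"
    proof (cases "length x \<le> J0")
      case True then show ?thesis by simp
    next
      case False
      then have "x \<noteq> []" by auto
      then obtain m where m: "1 \<le> m" "m \<le> n" "x = take (cgr_D u m) (cgr_word u m)"
        using cgr_tree_elem[OF x] by blast
      have Dm: "cgr_D u m \<le> m" by (rule cgr_D_props(2)[OF m(1)])
      then have lx: "length x = cgr_D u m" using m(3) by simp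
      have xK: "length x \<le> K" using lx DK m by simp
      show ?thesis
      proof (cases "exp (- a * real (length x)) \<le> prod_list (map p x)")
        case True
        then have "x \<in> ?G (length x)" by (simp add: words_def)
        then show ?thesis using xK by blast
      next
        case bad: False
        have tx: "take (length x) (cgr_word u m) = x" using m(3) lx by simp
        have "(m, length x) \<in> BadS a J0 n u"
          unfolding BadS_def using m(1,2) False bad Dm lx tx by (simp add: not_le)
        moreover have "x = take (snd (m, length x)) (cgr_word u (fst (m, length x)))"
          using m(3) lx by simp
        ultimately show ?thesis by blast
      qed
    qed
  qed
  have "real (n + 1) = real (card (cgr_tree u n))" by (simp add: card_cgr_tree)
  also have "\<dots> \<le> real (card (?A1 \<union> ?A2 \<union> ?A3))"
    using sub fin1 fin2 fin3 by (intro of_nat_mono card_mono) auto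
  also have "\<dots> \<le> real (card ?A1) + real (card ?A2) + real (card ?A3)"
  proof -
    have "card (?A1 \<union> ?A2 \<union> ?A3) \<le> card ?A1 + card ?A2 + card ?A3"
      using card_Un_le[of "?A1 \<union> ?A2" ?A3] card_Un_le[of ?A1 ?A2] by linarith
    then show ?thesis by linarith
  qed
  also have "real (card ?A2) \<le> real (K + 1) * exp (a * K)"
  proof -
    have "card ?A2 \<le> (\<Sum>j\<in>{..K}. card (?G j))" by (rule card_UN_le) simp
    then have "real (card ?A2) \<le> real (\<Sum>j\<in>{..K}. card (?G j))" by (rule of_nat_mono)
    also have "\<dots> = (\<Sum>j\<in>{..K}. real (card (?G j)))" by (rule of_nat_sum)
    also have "\<dots> \<le> (\<Sum>j\<in>{..K}. exp (a * K))"
    proof (rule sum_mono)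
      fix j assume "j \<in> {..K}"
      then have "exp (a * real j) \<le> exp (a * K)" using a by (auto intro: mult_left_mono)
      then show "real (card (?G j)) \<le> exp (a * K)" using card_good_words[of j a] by linarith
    qed
    also have "\<dots> = real (K + 1) * exp (a * K)" by simp
    finally show ?thesis .
  qed
  also have "real (card ?A3) \<le> real (card (BadS a J0 n u))"
    by (intro of_nat_mono card_image_le finite_BadS)
  finally show ?thesis by simp
qed

lemma bad_prob:
  assumes "1 \<le> m" "j \<le> m" "0 < s" "s < 1"
  shows "prob {\<omega>\<in>space M. prod_list (map p (take j (Wd \<omega> m))) < exp (- a * real j)}
           \<le> ((\<Sum>u\<in>UNIV. p u powr (1 - s)) * exp (- s * a)) ^ j"
proof -
  let ?BW = "{w\<in>words j. prod_list (map p w) < exp (- a * real j)}"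
  have eq: "{\<omega>\<in>space M. prod_list (map p (take j (Wd \<omega> m))) < exp (- a * real j)}
      = (\<Union>w\<in>?BW. {\<omega>\<in>space M. take j (Wd \<omega> m) = w})"
    using assms by (auto simp: words_def Wd_def)
  have finBW: "finite ?BW" by (rule finite_subset[OF _ finite_words[of j]]) auto
  have "prob (\<Union>w\<in>?BW. {\<omega>\<in>space M. take j (Wd \<omega> m) = w}) = (\<Sum>w\<in>?BW. prob {\<omega>\<in>space M. take j (Wd \<omega> m) = w})"
    by (rule finite_measure_finite_Union[OF finBW]) (use assms in \<open>auto simp: disjoint_family_on_def words_def intro!: word_event\<close>)
  also have "\<dots> = (\<Sum>w\<in>?BW. prod_list (map p w))"
    by (rule sum.cong) (use assms in \<open>auto simp: words_def intro!: word_prob\<close>)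
  also have "\<dots> \<le> ((\<Sum>u\<in>UNIV. p u powr (1 - s)) * exp (- s * a)) ^ j"
    by (rule bad_word_bound) (use assms in auto)
  finally show ?thesis unfolding eq .
qed

lemma geom_tail:
  assumes "0 \<le> (r::real)" "r < 1"
  shows "(\<Sum>j\<in>{J0<..m}. r ^ j) \<le> r ^ Suc J0 / (1 - r)"
proof (cases "J0 < m")
  case False
  have "0 \<le> r ^ Suc J0 / (1 - r)" using assms by (intro divide_nonneg_pos) auto
  then show ?thesis using False by simp
next
  case True
  have "{J0<..m} = (\<lambda>i. Suc J0 + i) ` {..<m - J0}" 
  proof (rule set_eqI)
    fix x show "x \<in> {J0<..m} \<longleftrightarrow> x \<in> (\<lambda>i. Suc J0 + i) ` {..<m - J0}"
    proof
      assume "x \<in> {J0<..m}"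
      then have "x = Suc J0 + (x - Suc J0)" "x - Suc J0 < m - J0" by auto
      then show "x \<in> (\<lambda>i. Suc J0 + i) ` {..<m - J0}" by blast
    next
      assume "x \<in> (\<lambda>i. Suc J0 + i) ` {..<m - J0}"
      then show "x \<in> {J0<..m}" by auto
    qed
  qed
  moreover have "inj_on (\<lambda>i. Suc J0 + i) {..<m - J0}" by (auto simp: inj_on_def)
  ultimately have "(\<Sum>j\<in>{J0<..m}. r ^ j) = (\<Sum>i<m - J0. r ^ (Suc J0 + i))"
    by (simp only: sum.reindex o_def)
  also have "\<dots> = r ^ Suc J0 * (\<Sum>i<m - J0. r ^ i)"
    by (simp add: power_add sum_distrib_left mult.assoc)
  also have "(\<Sum>i<m - J0. r ^ i) \<le> 1 / (1 - r)"
  proof -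
    have "(\<Sum>i<m - J0. r ^ i) = (1 - r ^ (m - J0)) / (1 - r)" using assms by (simp add: sum_gp_strict)
    also have "\<dots> \<le> 1 / (1 - r)" using assms by (intro divide_right_mono) auto
    finally show ?thesis .
  qed
  then have "r ^ Suc J0 * (\<Sum>i<m - J0. r ^ i) \<le> r ^ Suc J0 * (1 / (1 - r))"
    using assms by (intro mult_left_mono) auto
  finally show ?thesis by simp
qed

end

context cgr_prob begin

lemma D_event: "{\<omega>\<in>space M. real (cgr_D (\<lambda>k. U k \<omega>) m) \<le> c * ln (real m)} \<in> events"
proof (rule local_event[where N=m])
  fix u v :: "nat \<Rightarrow> letter" assume "\<And>i. 1 \<le> i \<Longrightarrow> i \<le> m \<Longrightarrow> u i = v i"
  then have "cgr_D u m = cgr_D v m" by (rule cgr_D_local)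
  then show "(real (cgr_D u m) \<le> c * ln (real m)) = (real (cgr_D v m) \<le> c * ln (real m))" by simp
qed

lemma BadS_event: "{\<omega>\<in>space M. x \<le> real (card (BadS a J0 n (\<lambda>k. U k \<omega>)))} \<in> events"
proof (rule local_event[where N=n])
  fix u v :: "nat \<Rightarrow> letter" assume uv: "\<And>i. 1 \<le> i \<Longrightarrow> i \<le> n \<Longrightarrow> u i = v i"
  have "BadS a J0 n u = BadS a J0 n v"
    unfolding BadS_def
  proof (rule Collect_cong)
    fix mj :: "nat \<times> nat"
    show "(mj \<in> (SIGMA m:{1..n}. {J0<..m}) \<and> prod_list (map p (take (snd mj) (cgr_word u (fst mj)))) < exp (- a * real (snd mj))) =
          (mj \<in> (SIGMA m:{1..n}. {J0<..m}) \<and> prod_list (map p (take (snd mj) (cgr_word v (fst mj)))) < exp (- a * real (snd mj)))"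
    proof (cases "mj \<in> (SIGMA m:{1..n}. {J0<..m})")
      case True
      then have "cgr_word u (fst mj) = cgr_word v (fst mj)" by (intro cgr_word_local uv) auto
      then show ?thesis by simp
    qed simp
  qed
  then show "(x \<le> real (card (BadS a J0 n u))) = (x \<le> real (card (BadS a J0 n v)))" by simp
qed

lemma F_null_bound:
  assumes c: "0 < c" and a: "0 < a" and ac: "a * c < 1" and s: "0 < s" "s < 1"
    and N0: "1 \<le> N0"
  defines "\<rho> \<equiv> (\<Sum>u\<in>UNIV. p u powr (1 - s)) * exp (- s * a)"
  assumes \<rho>: "\<rho> < 1"
  shows "prob {\<omega>\<in>space M. \<forall>m\<ge>N0. real (cgr_D (\<lambda>k. U k \<omega>) m) \<le> c * ln (real m)} \<le> 2 * \<rho> ^ Suc J0 / (1 - \<rho>)"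
proof -
  have \<rho>0: "0 \<le> \<rho>" unfolding \<rho>_def by (intro mult_nonneg_nonneg sum_nonneg) auto
  define F where "F = {\<omega>\<in>space M. \<forall>m\<ge>N0. real (cgr_D (\<lambda>k. U k \<omega>) m) \<le> c * ln (real m)}"
  define C1 where "C1 = real (card {x::letter list. length x \<le> J0})"
  define E where "E = exp (a * real N0)"
  define t where "t = a * c"
  have t: "0 < t" "t < 1" using a c ac by (auto simp: t_def)
  have "\<forall>\<^sub>F n in at_top. C1 + 1 + (c * ln (real n) + real N0 + 1) * E * real n powr t \<le> real n / 2"
    using t by real_asymp
  then obtain n0 where n0: "\<And>n. n \<ge> n0 \<Longrightarrow> C1 + 1 + (c * ln (real n) + real N0 + 1) * E * real n powr t \<le> real n / 2"
    by (auto simp: eventually_at_top_linorder)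
  define n where "n = max n0 N0"
  have nbig: "C1 + 1 + (c * ln (real n) + real N0 + 1) * E * real n powr t \<le> real n / 2"
    by (rule n0) (simp add: n_def)
  have n1: "1 \<le> n" "N0 \<le> n" using N0 by (auto simp: n_def)
  define K where "K = nat \<lfloor>c * ln (real n)\<rfloor> + N0"
  define S where "S = (SIGMA m:{1..n}. {J0<..m})"
  define B where "B mj = {\<omega>\<in>space M. prod_list (map p (take (snd mj) (Wd \<omega> (fst mj)))) < exp (- a * real (snd mj))}" for mj
  define Z where "Z = {\<omega>\<in>space M. real n / 2 \<le> real (card (BadS a J0 n (\<lambda>k. U k \<omega>)))}"
  have lnn: "0 \<le> ln (real n)" using n1 by simp
  have KE: "real (K + 1) * exp (a * K) \<le> (c * ln (real n) + real N0 + 1) * E * real n powr t"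
  proof -
    have Kle: "real K \<le> c * ln (real n) + real N0"
      unfolding K_def using kk_le[of "c * ln (real n)"] c lnn by simp
    have "exp (a * K) \<le> exp (a * (c * ln (real n) + real N0))"
      using Kle a by (auto intro: mult_left_mono)
    also have "\<dots> = E * real n powr t"
      using n1 by (simp add: E_def t_def powr_def exp_add[symmetric] algebra_simps)
    finally have "exp (a * K) \<le> E * real n powr t" .
    moreover have "real (K + 1) \<le> c * ln (real n) + real N0 + 1" using Kle by simp
    ultimately show ?thesis
      by (simp add: mult.assoc mult_mono)
  qed
  have FZ: "F \<subseteq> Z"
  proof
    fix \<omega> assume \<omega>: "\<omega> \<in> F"
    let ?u = "\<lambda>k. U k \<omega>"
    have DK: "cgr_D ?u m \<le> K" if m: "1 \<le> m" "m \<le> n" for m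
    proof (cases "m < N0")
      case True
      then show ?thesis using cgr_D_props(2)[OF m(1), of ?u] by (simp add: K_def)
    next
      case False
      then have "real (cgr_D ?u m) \<le> c * ln (real m)" using \<omega> by (auto simp: F_def)
      also have "\<dots> \<le> c * ln (real n)" using m c by (intro mult_left_mono) auto
      finally have "cgr_D ?u m \<le> nat \<lfloor>c * ln (real n)\<rfloor>" by (rule le_nat_floor)
      then show ?thesis by (simp add: K_def)
    qed
    have "real (n + 1) \<le> C1 + real (K + 1) * exp (a * K) + real (card (BadS a J0 n ?u))"
      unfolding C1_def by (rule count_bad) (use a DK in auto)
    then have "real n / 2 \<le> real (card (BadS a J0 n ?u))" using KE nbig by simp
    then show "\<omega> \<in> Z" using \<omega> by (simp add: Z_def F_def)
  qed
  have Zeq: "Z = {\<omega>\<in>space M. real n / 2 \<le> real (card {mj\<in>S. \<omega> \<in> B mj})}"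
  proof -
    have "BadS a J0 n (\<lambda>k. U k \<omega>) = {mj\<in>S. \<omega> \<in> B mj}" if "\<omega> \<in> space M" for \<omega>
      using that by (auto simp: BadS_def S_def B_def Wd_def)
    then show ?thesis unfolding Z_def by auto
  qed
  have Bev: "B mj \<in> events" for mj
  proof -
    have "B mj = {\<omega>\<in>space M. (\<lambda>u. prod_list (map p (take (snd mj) (cgr_word u (fst mj)))) < exp (- a * real (snd mj))) (\<lambda>k. U k \<omega>)}"
      by (simp add: B_def Wd_def)
    also have "\<dots> \<in> events"
    proof (rule local_event[where N="fst mj"])
      fix u v :: "nat \<Rightarrow> letter" assume "\<And>i. 1 \<le> i \<Longrightarrow> i \<le> fst mj \<Longrightarrow> u i = v i"
      then have "cgr_word u (fst mj) = cgr_word v (fst mj)" by (rule cgr_word_local)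
      then show "(prod_list (map p (take (snd mj) (cgr_word u (fst mj)))) < exp (- a * real (snd mj))) =
                 (prod_list (map p (take (snd mj) (cgr_word v (fst mj)))) < exp (- a * real (snd mj)))" by simp
    qed
    finally show ?thesis .
  qed
  have finS: "finite S" unfolding S_def by auto
  have "prob F \<le> prob Z"
    by (rule finite_measure_mono[OF FZ]) (unfold Z_def, rule BadS_event)
  also have "\<dots> \<le> (\<Sum>mj\<in>S. prob (B mj)) / (real n / 2)"
    unfolding Zeq by (rule markov_count[OF finS Bev]) (use n1 in auto)
  also have "(\<Sum>mj\<in>S. prob (B mj)) \<le> real n * (\<rho> ^ Suc J0 / (1 - \<rho>))"
  proof -
    have "(\<Sum>mj\<in>S. prob (B mj)) \<le> (\<Sum>mj\<in>S. \<rho> ^ snd mj)"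
    proof (rule sum_mono)
      fix mj assume "mj \<in> S"
      then show "prob (B mj) \<le> \<rho> ^ snd mj"
        unfolding B_def \<rho>_def by (intro bad_prob s) (auto simp: S_def)
    qed
    also have "\<dots> = (\<Sum>m\<in>{1..n}. \<Sum>j\<in>{J0<..m}. \<rho> ^ j)"
      unfolding S_def by (subst sum.Sigma) (auto simp: case_prod_unfold)
    also have "\<dots> \<le> (\<Sum>m\<in>{1..n}. \<rho> ^ Suc J0 / (1 - \<rho>))"
      by (rule sum_mono) (rule geom_tail[OF \<rho>0 \<rho>])
    also have "\<dots> = real n * (\<rho> ^ Suc J0 / (1 - \<rho>))" by simp
    finally show ?thesis .
  qed
  then have "(\<Sum>mj\<in>S. prob (B mj)) / (real n / 2) \<le> real n * (\<rho> ^ Suc J0 / (1 - \<rho>)) / (real n / 2)"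
    using n1 by (intro divide_right_mono) auto
  also have "\<dots> = 2 * \<rho> ^ Suc J0 / (1 - \<rho>)" using n1 \<rho> by (simp add: field_simps)
  finally show ?thesis unfolding F_def .
qed

lemma limsup_lower_AE:
  assumes c: "0 < c" "c * h < 1"
  shows "AE \<omega> in M. \<forall>N. \<exists>n\<ge>N. c \<le> real (cgr_D (\<lambda>k. U k \<omega>) n) / ln (real n)"
proof -
  define a where "a = (h + 1 / c) / 2"
  have ha: "h < a" using c by (simp add: a_def field_simps)
  have a0: "0 < a" using ha h_pos by simp
  have ac: "a * c < 1" using c by (simp add: a_def field_simps)
  obtain s where s: "0 < s" "s < 1" and \<rho>: "(\<Sum>u\<in>UNIV. p u powr (1 - s)) * exp (- s * a) < 1"
    using chernoff_param[OF ha] by blast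
  define \<rho> where "\<rho> = (\<Sum>u\<in>UNIV. p u powr (1 - s)) * exp (- s * a)"
  have \<rho>1: "\<rho> < 1" using \<rho> by (simp add: \<rho>_def)
  have \<rho>0: "0 \<le> \<rho>" unfolding \<rho>_def by (intro mult_nonneg_nonneg sum_nonneg) auto
  define F where "F N0 = {\<omega>\<in>space M. \<forall>m\<ge>N0. real (cgr_D (\<lambda>k. U k \<omega>) m) \<le> c * ln (real m)}" for N0
  have Fev: "F N0 \<in> events" for N0
  proof -
    have "F N0 = (\<Inter>m\<in>{N0..}. {\<omega>\<in>space M. real (cgr_D (\<lambda>k. U k \<omega>) m) \<le> c * ln (real m)})"
      by (auto simp: F_def)
    also have "\<dots> \<in> events" by (intro sets.countable_INT') (auto simp del: of_nat_le_iff intro: D_event[where c=c])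
    finally show ?thesis .
  qed
  have F0: "prob (F N0) = 0" if N0: "1 \<le> N0" for N0
  proof -
    have le: "prob (F N0) \<le> 2 * \<rho> ^ Suc J0 / (1 - \<rho>)" for J0
      unfolding F_def \<rho>_def by (rule F_null_bound[OF c(1) a0 ac s N0]) (use \<rho>1 in \<open>simp add: \<rho>_def\<close>)
    have lim: "(\<lambda>J0. 2 * \<rho> ^ Suc J0 / (1 - \<rho>)) \<longlonglongrightarrow> 2 * 0 / (1 - \<rho>)"
      by (intro tendsto_intros LIMSEQ_power_zero[THEN LIMSEQ_Suc]) (use \<rho>0 \<rho>1 in auto)
    have "prob (F N0) \<le> 0"
      using LIMSEQ_le_const[OF lim, of "prob (F N0)"] le by auto
    then show ?thesis using measure_nonneg[of M "F N0"] by linarith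
  qed
  have "AE \<omega> in M. \<omega> \<notin> F (Suc N)" for N
    by (rule AE_not_in) (use Fev F0 in \<open>auto simp: null_sets_def emeasure_eq_measure\<close>)
  then have "AE \<omega> in M. \<forall>N. \<omega> \<notin> F (Suc N)" by (simp add: AE_all_countable)
  with AE_space show ?thesis
  proof eventually_elim
    case (elim \<omega>)
    show ?case
    proof
      fix N :: nat
      have "\<omega> \<notin> F (Suc (max N 1))" using elim by blast
      then obtain m where m: "m \<ge> Suc (max N 1)" "\<not> real (cgr_D (\<lambda>k. U k \<omega>) m) \<le> c * ln (real m)"
        using elim by (auto simp: F_def)
      have "0 < ln (real m)" using m by simp
      then have "c \<le> real (cgr_D (\<lambda>k. U k \<omega>) m) / ln (real m)" using m(2) by (simp add: field_simps)
      then show "\<exists>n\<ge>N. c \<le> real (cgr_D (\<lambda>k. U k \<omega>) n) / ln (real n)" using m(1) by (intro exI[of _ m]) auto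
    qed
  qed
qed

end

lemma limsup_ge_freq:
  assumes "\<forall>N. \<exists>n\<ge>N. c \<le> x n"
  shows "ereal c \<le> limsup (\<lambda>n. ereal (x n))"
  unfolding limsup_INF_SUP
proof (rule INF_greatest)
  fix N :: nat
  obtain n where "n \<ge> N" "c \<le> x n" using assms by blast
  then show "ereal c \<le> (SUP m\<in>{N..}. ereal (x m))"
    by (intro SUP_upper2[of n]) auto
qed

lemma liminf_le_freq:
  assumes "\<forall>N. \<exists>n\<ge>N. x n \<le> c"
  shows "liminf (\<lambda>n. ereal (x n)) \<le> ereal c"
  unfolding liminf_SUP_INF
proof (rule SUP_least)
  fix N :: nat
  obtain n where "n \<ge> N" "x n \<le> c" using assms by blast
  then show "(INF m\<in>{N..}. ereal (x m)) \<le> ereal c"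
    by (intro INF_lower2[of n]) auto
qed

lemma ereal_lower_lim:
  assumes "\<And>k. ereal (f k) \<le> L" "f \<longlonglongrightarrow> y"
  shows "ereal y \<le> L"
proof (rule tendsto_le[OF trivial_limit_sequentially tendsto_const])
  show "(\<lambda>k. ereal (f k)) \<longlonglongrightarrow> ereal y" using assms(2) by simp
  show "\<forall>\<^sub>F k in sequentially. ereal (f k) \<le> L" using assms(1) by simp
qed

lemma ereal_upper_lim:
  assumes "\<And>k. L \<le> ereal (f k)" "f \<longlonglongrightarrow> y"
  shows "L \<le> ereal y"
proof (rule tendsto_le[OF trivial_limit_sequentially _ tendsto_const])
  show "(\<lambda>k. ereal (f k)) \<longlonglongrightarrow> ereal y" using assms(2) by simp
  show "\<forall>\<^sub>F k in sequentially. L \<le> ereal (f k)" using assms(1) by simp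
qed

context cgr_prob begin

lemma main_AE:
  shows "AE \<omega> in M.
           ereal (1 / h) \<le> limsup (\<lambda>n. ereal (real (cgr_D (\<lambda>k. U k \<omega>) n) / ln (real n))) \<and>
           liminf (\<lambda>n. ereal (real (cgr_D (\<lambda>k. U k \<omega>) n) / ln (real n))) = ereal (1 / hp)"
proof -
  define e where "e k = 1 - 1 / (real k + 2)" for k :: nat
  have e: "0 < e k" "e k < 1" for k by (auto simp: e_def field_simps)
  have elimit: "e \<longlonglongrightarrow> 1" unfolding e_def by real_asymp
  have A1: "AE \<omega> in M. \<forall>k. \<forall>N. \<exists>n\<ge>N. e k / h \<le> real (cgr_D (\<lambda>k. U k \<omega>) n) / ln (real n)"
  proof (subst AE_all_countable, intro allI)
    fix k show "AE \<omega> in M. \<forall>N. \<exists>n\<ge>N. e k / h \<le> real (cgr_D (\<lambda>k. U k \<omega>) n) / ln (real n)"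
      by (rule limsup_lower_AE) (use e[of k] h_pos in auto)
  qed
  have A2: "AE \<omega> in M. \<forall>k. \<forall>\<^sub>F n in sequentially. e k / hp \<le> real (cgr_D (\<lambda>k. U k \<omega>) n) / ln (real n)"
    unfolding AE_all_countable
    by (intro allI D_lower_AE) (use e hp_pos in auto)
  have A3: "AE \<omega> in M. \<forall>k. \<forall>N. \<exists>n\<ge>N. real (cgr_D (\<lambda>k. U k \<omega>) n) / ln (real n) \<le> 1 / (e k * hp)"
  proof (subst AE_all_countable, intro allI)
    fix k show "AE \<omega> in M. \<forall>N. \<exists>n\<ge>N. real (cgr_D (\<lambda>k. U k \<omega>) n) / ln (real n) \<le> 1 / (e k * hp)"
      by (rule liminf_upper_AE) (use e[of k] in auto)
  qed
  show ?thesis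
    using A1 A2 A3
  proof eventually_elim
    case (elim \<omega>)
    let ?x = "\<lambda>n. real (cgr_D (\<lambda>k. U k \<omega>) n) / ln (real n)"
    have "ereal (1 / h) \<le> limsup (\<lambda>n. ereal (?x n))"
    proof (rule ereal_lower_lim[where f="\<lambda>k. e k / h"])
      show "ereal (e k / h) \<le> limsup (\<lambda>n. ereal (?x n))" for k
        using elim(1) by (intro limsup_ge_freq) auto
      show "(\<lambda>k. e k / h) \<longlonglongrightarrow> 1 / h" by (intro tendsto_intros elimit) (use h_pos in auto)
    qed
    moreover have "ereal (1 / hp) \<le> liminf (\<lambda>n. ereal (?x n))"
    proof (rule ereal_lower_lim[where f="\<lambda>k. e k / hp"])
      show "ereal (e k / hp) \<le> liminf (\<lambda>n. ereal (?x n))" for k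
        using elim(2) by (intro Liminf_bounded) (auto elim: eventually_mono)
      show "(\<lambda>k. e k / hp) \<longlonglongrightarrow> 1 / hp" by (intro tendsto_intros elimit) (use hp_pos in auto)
    qed
    moreover have "liminf (\<lambda>n. ereal (?x n)) \<le> ereal (1 / hp)"
    proof (rule ereal_upper_lim[where f="\<lambda>k. 1 / (e k * hp)"])
      show "liminf (\<lambda>n. ereal (?x n)) \<le> ereal (1 / (e k * hp))" for k
        using elim(3) by (intro liminf_le_freq) auto
      show "(\<lambda>k. 1 / (e k * hp)) \<longlonglongrightarrow> 1 / hp"
        using tendsto_divide[OF tendsto_const tendsto_mult[OF elimit tendsto_const[of hp]], of 1] hp_pos
        by simp
    qed
    ultimately show ?case by simp
  qed
qed

end

theorem mainTheorem7:
  fixes M :: "'s measure" and U :: "nat \<Rightarrow> 's \<Rightarrow> letter" and p :: "letter \<Rightarrow> real"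
  assumes "prob_space M"
    and "prob_space.indep_vars M (\<lambda>_. count_space UNIV) U {1..}"
    and "\<And>n u. n \<ge> 1 \<Longrightarrow> prob_space.prob M {\<omega> \<in> space M. U n \<omega> = u} = p u"
    and "\<And>u. p u > 0"
    and "\<exists>u v. p u \<noteq> p v"
  shows "(let h = - (\<Sum>u\<in>{A,C,G,T}. p u * ln (p u));
              hplus = ln (1 / Min (p ` {A,C,G,T}))
          in 1 / h > 1 / hplus \<and>
             (AE \<omega> in M.
                limsup (\<lambda>n. ereal (real (cgr_D (\<lambda>k. U k \<omega>) n) / ln (real n))) \<ge> ereal (1 / h) \<and>
                liminf (\<lambda>n. ereal (real (cgr_D (\<lambda>k. U k \<omega>) n) / ln (real n))) = ereal (1 / hplus)))"
proof -
  interpret cgr_prob M U p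
    by (rule cgr_prob.intro[OF assms(1)], rule cgr_prob_axioms.intro) (use assms in auto)
  have heq: "- (\<Sum>u\<in>{A,C,G,T}. p u * ln (p u)) = h"
    unfolding h_def UNIV_letter ..
  have hpeq: "ln (1 / Min (p ` {A,C,G,T})) = hp"
    unfolding hp_def q_def UNIV_letter ..
  have ineq: "1 / h > 1 / hp"
    using h_pos h_lt_hp[OF assms(5)] by (simp add: frac_less2)
  show ?thesis
    unfolding Let_def heq hpeq using ineq main_AE by simp
qed

end
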